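(* Let $\beta>0$, $\lambda>0$, and $\mathcal A\subset\{1,\dots,p\}$ with $|\mathcal A|=k$. Then $\frac{d}{dc}P(I_\lambda\mid c,\boldsymbol z_{\mathcal A}=\mathbf 1)\big|_{c=0}=0$ for all $\lambda>0$, and $\frac{d}{dc}P(S_\lambda\mid c,\boldsymbol\beta_{\mathcal A}=\beta\mathbf 1)\big|_{c=0}\ge0$ for all $\lambda$ satisfying \[ 2\lambda_n\ge\frac{g(\tau_n)}{G(\tau_n)}, \] where $G$ and $g$ are the $N(0,1)$ cumulative distribution function and density, $\lambda_n=\lambda\sqrt n$ and $\tau_n=\sqrt n(\beta-\lambda)$.
   Context: Fix integers $n\ge1$ and $1\le k<p$. $\mathbf J$ is an all-ones matrix; vector inequalities and absolute values are componentwise. For real $c$ with $-(k-1)^{-1}<c<1$ let $\mathbf C=(1-c)\mathbf I_p+c\mathbf J_p$. For $\mathcal A$ with complement $\mathcal I$ let $\mathbf C_{\mathcal A},\mathbf C_{\mathcal I},\mathbf C_{\mathcal I\mathcal A},\mathbf C_{\mathcal A\mathcal I}$ be the submatrices (rows, columns). For a sign vector $\boldsymbol z_{\mathcal A}\in\{-1,1\}^k$ with $\mathbf Z_{\mathcal A}=\mathrm{Diag}(\boldsymbol z_{\mathcal A})$ and $\boldsymbol\beta_{\mathcal A}\in\mathbb R^k$ with that sign vector: $P(S_\lambda\mid c,\boldsymbol\beta_{\mathcal A})=P(\boldsymbol u<\sqrt n\,\mathbf Z_{\mathcal A}\boldsymbol\beta_{\mathcal A})$ with $\boldsymbol u\sim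 N(\lambda\sqrt n\,\mathbf Z_{\mathcal A}\mathbf C_{\mathcal A}^{-1}\boldsymbol z_{\mathcal A},\ \mathbf Z_{\mathcal A}\mathbf C_{\mathcal A}^{-1}\mathbf Z_{\mathcal A})$, and $P(I_\lambda\mid c,\boldsymbol z_{\mathcal A})=P(|\boldsymbol v|\le\lambda\sqrt n\mathbf 1)$ with $\boldsymbol v\sim N(\lambda\sqrt n\,\mathbf C_{\mathcal I\mathcal A}\mathbf C_{\mathcal A}^{-1}\boldsymbol z_{\mathcal A},\ \mathbf C_{\mathcal I}-\mathbf C_{\mathcal I\mathcal A}\mathbf C_{\mathcal A}^{-1}\mathbf C_{\mathcal A\mathcal I})$. (These are the lasso sign recovery events for a design with scaling matrix $\mathbf V=\mathbf I$ and completely symmetric correlation matrix $\mathbf C$.) *)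

theory Defs
  imports "HOL-Probability.Probability"
begin

text \<open>Matrices are functions nat => nat => real; vectors are nat => real; the relevant
  index set S (a finite set of naturals) is always passed explicitly.\<close>

definition cs_corr :: "real \<Rightarrow> nat \<Rightarrow> nat \<Rightarrow> real" where
  "cs_corr c i j = (if i = j then 1 else c)"

definition minv :: "nat set \<Rightarrow> (nat \<Rightarrow> nat \<Rightarrow> real) \<Rightarrow> (nat \<Rightarrow> nat \<Rightarrow> real)" where
  "minv S M = (SOME N.
      (\<forall>i\<in>S. \<forall>j\<in>S. (\<Sum>l\<in>S. M i l * N l j) = (if i = j then 1 else 0)) \<and>
      (\<forall>i\<in>S. \<forall>j\<in>S. (\<Sum>l\<in>S. N i l * M l j) = (if i = j then 1 else 0)))"

definition mdet :: "nat set \<Rightarrow> (nat \<Rightarrow> nat \<Rightarrow> real) \<Rightarrow> real" where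
  "mdet S M = (\<Sum>\<pi>\<in>{\<pi>. \<pi> permutes S}. of_int (sign \<pi>) * (\<Prod>i\<in>S. M i (\<pi> i)))"

definition mvn_density :: "nat set \<Rightarrow> (nat \<Rightarrow> real) \<Rightarrow> (nat \<Rightarrow> nat \<Rightarrow> real) \<Rightarrow> (nat \<Rightarrow> real) \<Rightarrow> real" where
  "mvn_density S mu Sg x =
     exp (- (1/2) * (\<Sum>i\<in>S. \<Sum>j\<in>S. (x i - mu i) * minv S Sg i j * (x j - mu j)))
     / sqrt ((2 * pi) ^ card S * mdet S Sg)"

definition mvn_prob :: "nat set \<Rightarrow> (nat \<Rightarrow> real) \<Rightarrow> (nat \<Rightarrow> nat \<Rightarrow> real) \<Rightarrow> (nat \<Rightarrow> real) set \<Rightarrow> real" where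
  "mvn_prob S mu Sg E =
     set_lebesgue_integral (PiM S (\<lambda>_. lborel)) E (mvn_density S mu Sg)"

text \<open>P(S_lambda | c, beta_A), with sign vector z and Z = Diag z:
  u ~ N(lambda sqrt n Z C_A^{-1} z, Z C_A^{-1} Z), event u < sqrt n Z beta_A.\<close>
definition PS :: "nat \<Rightarrow> real \<Rightarrow> real \<Rightarrow> nat set \<Rightarrow> (nat \<Rightarrow> real) \<Rightarrow> real" where
  "PS n lam c A beta =
    (let z = (\<lambda>i. sgn (beta i)); Ainv = minv A (cs_corr c) in
     mvn_prob A
       (\<lambda>i. lam * sqrt (real n) * z i * (\<Sum>j\<in>A. Ainv i j * z j))
       (\<lambda>i j. z i * Ainv i j * z j)
       {u. \<forall>i\<in>A. u i < sqrt (real n) * z i * beta i})"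

text \<open>P(I_lambda | c, z_A), I = {1..p} - A:
  v ~ N(lambda sqrt n C_IA C_A^{-1} z, C_I - C_IA C_A^{-1} C_AI), event |v| <= lambda sqrt n 1.\<close>
definition PI :: "nat \<Rightarrow> real \<Rightarrow> real \<Rightarrow> nat \<Rightarrow> nat set \<Rightarrow> (nat \<Rightarrow> real) \<Rightarrow> real" where
  "PI n lam c p A z =
    (let I = {1..p} - A; C = cs_corr c; Ainv = minv A C in
     mvn_prob I
       (\<lambda>i. lam * sqrt (real n) * (\<Sum>a\<in>A. \<Sum>b\<in>A. C i a * Ainv a b * z b))
       (\<lambda>i j. C i j - (\<Sum>a\<in>A. \<Sum>b\<in>A. C i a * Ainv a b * C b j))
       {v. \<forall>i\<in>I. \<bar>v i\<bar> \<le> lam * sqrt (real n)})"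

definition std_normal_cdf :: "real \<Rightarrow> real" where
  "std_normal_cdf x = (LBINT t:{..x}. std_normal_density t)"

end

theory Submission
  imports Defs "HOL-Real_Asymp.Real_Asymp"
begin

lemma psf: "product_sigma_finite (\<lambda>_::nat. lborel)"
  by unfold_locales

definition is_inv :: "nat set \<Rightarrow> (nat \<Rightarrow> nat \<Rightarrow> real) \<Rightarrow> (nat \<Rightarrow> nat \<Rightarrow> real) \<Rightarrow> bool" where
  "is_inv S M N \<longleftrightarrow>
      (\<forall>i\<in>S. \<forall>j\<in>S. (\<Sum>l\<in>S. M i l * N l j) = (if i = j then 1 else 0)) \<and>
      (\<forall>i\<in>S. \<forall>j\<in>S. (\<Sum>l\<in>S. N i l * M l j) = (if i = j then 1 else 0))"

lemma minv_is_inv: assumes "is_inv S M N0" shows "is_inv S M (minv S M)"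
proof -
  have "is_inv S M (SOME N. is_inv S M N)" using someI[of "is_inv S M" N0] assms by blast
  then show ?thesis unfolding minv_def is_inv_def by simp
qed

lemma is_inv_sym: "is_inv S M N \<Longrightarrow> is_inv S N M"
  unfolding is_inv_def by blast

lemma sum_if_eq1: fixes f :: "nat \<Rightarrow> real" shows "finite S \<Longrightarrow> i \<in> S \<Longrightarrow> (\<Sum>l\<in>S. (if i = l then a else 0) * f l) = a * f i"
proof -
  assume "finite S" "i \<in> S"
  have "(\<Sum>l\<in>S. (if i = l then a else 0) * f l) = (\<Sum>l\<in>S. (if i = l then a * f l else 0))"
    by (intro sum.cong) auto
  also have "\<dots> = a * f i" using \<open>finite S\<close> \<open>i \<in> S\<close> by (simp add: sum.delta)
  finally show ?thesis .
qed

lemma sum_if_eq2: fixes f :: "nat \<Rightarrow> real" shows "finite S \<Longrightarrow> j \<in> S \<Longrightarrow> (\<Sum>l\<in>S. f l * (if l = j then a else 0)) = f j * a"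
proof -
  assume "finite S" "j \<in> S"
  have "(\<Sum>l\<in>S. f l * (if l = j then a else 0)) = (\<Sum>l\<in>S. (if j = l then f l * a else 0))"
    by (intro sum.cong) auto
  also have "\<dots> = f j * a" using \<open>finite S\<close> \<open>j \<in> S\<close> by (simp add: sum.delta)
  finally show ?thesis .
qed

lemma minv_unique:
  assumes fin: "finite S" and inv: "is_inv S M N0" and i: "i \<in> S" and j: "j \<in> S"
  shows "minv S M i j = N0 i j"
proof -
  let ?N = "minv S M"
  have N: "is_inv S M ?N" by (rule minv_is_inv[OF inv])
  have "(\<Sum>l\<in>S. ?N i l * (\<Sum>r\<in>S. M l r * N0 r j)) = (\<Sum>l\<in>S. ?N i l * (if l = j then 1 else 0))"
    using inv j unfolding is_inv_def by (intro sum.cong) auto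
  also have "\<dots> = ?N i j" using sum_if_eq2[OF fin j] by simp
  finally have 1: "(\<Sum>l\<in>S. ?N i l * (\<Sum>r\<in>S. M l r * N0 r j)) = ?N i j" .
  have "(\<Sum>l\<in>S. ?N i l * (\<Sum>r\<in>S. M l r * N0 r j)) = (\<Sum>l\<in>S. \<Sum>r\<in>S. ?N i l * M l r * N0 r j)"
    by (simp add: sum_distrib_left mult.assoc)
  also have "\<dots> = (\<Sum>r\<in>S. \<Sum>l\<in>S. ?N i l * M l r * N0 r j)"
    by (rule sum.swap)
  also have "\<dots> = (\<Sum>r\<in>S. (\<Sum>l\<in>S. ?N i l * M l r) * N0 r j)"
    by (simp add: sum_distrib_right)
  also have "\<dots> = (\<Sum>r\<in>S. (if i = r then 1 else 0) * N0 r j)"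
    using N i unfolding is_inv_def by (intro sum.cong) auto
  also have "\<dots> = N0 i j" using sum_if_eq1[OF fin i] by simp
  finally show ?thesis using 1 by simp
qed

lemma inv_aIbJ:
  assumes fin: "finite S" and a: "a \<noteq> 0" and amb: "a + real (card S) * b \<noteq> 0"
    and M: "\<And>i j. i \<in> S \<Longrightarrow> j \<in> S \<Longrightarrow> M i j = (if i = j then a else 0) + b"
    and N: "\<And>i j. i \<in> S \<Longrightarrow> j \<in> S \<Longrightarrow> N i j = (if i = j then 1/a else 0) + (- b / (a * (a + real (card S) * b)))"
  shows "is_inv S M N"
proof -
  define g where "g = - b / (a * (a + real (card S) * b))"
  have h: "g * (a * (a + real (card S) * b)) = - b" unfolding g_def using a amb by simp
  have "a * (a * g + b / a + real (card S) * b * g) = g * (a * (a + real (card S) * b)) + b"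
    using a by (simp add: algebra_simps)
  also have "\<dots> = 0" using h by simp
  finally have key: "a * g + b / a + real (card S) * b * g = 0" using a by simp
  have gen: "(\<Sum>l\<in>S. ((if i = l then x else 0) + u) * ((if l = j then y else 0) + v))
      = (if i = j then x * y else 0) + x * v + u * y + real (card S) * u * v"
    if "i \<in> S" "j \<in> S" for i j x y u v
  proof -
    have "(\<Sum>l\<in>S. ((if i = l then x else 0) + u) * ((if l = j then y else 0) + v))
      = (\<Sum>l\<in>S. (if i = l then x else 0) * (if l = j then y else 0)) + (\<Sum>l\<in>S. (if i = l then x else 0) * v)
        + (\<Sum>l\<in>S. u * (if l = j then y else 0)) + (\<Sum>l\<in>S. u * v)"
      by (simp add: distrib_left distrib_right sum.distrib)
    also have "(\<Sum>l\<in>S. (if i = l then x else 0) * (if l = j then y else 0)) = (if i = j then x * y else 0)"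
      by (subst sum_if_eq1[OF fin that(1)]) auto
    also have "(\<Sum>l\<in>S. (if i = l then x else 0) * v) = x * v"
      using sum_if_eq1[OF fin that(1), of x "\<lambda>_. v"] by simp
    also have "(\<Sum>l\<in>S. u * (if l = j then y else 0)) = u * y"
      using sum_if_eq2[OF fin that(2), of "\<lambda>_. u"] by simp
    finally show ?thesis by simp
  qed
  have 1: "(\<Sum>l\<in>S. M i l * N l j) = (if i = j then 1 else 0)" if "i \<in> S" "j \<in> S" for i j
  proof -
    have "(\<Sum>l\<in>S. M i l * N l j) = (\<Sum>l\<in>S. ((if i = l then a else 0) + b) * ((if l = j then 1/a else 0) + g))"
      using that M N unfolding g_def by (intro sum.cong) auto
    also have "\<dots> = (if i = j then 1 else 0) + (a * g + b / a + real (card S) * b * g)"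
      using gen[OF that, of a b "1/a" g] a by (simp add: algebra_simps)
    finally show ?thesis using key by simp
  qed
  have 2: "(\<Sum>l\<in>S. N i l * M l j) = (if i = j then 1 else 0)" if "i \<in> S" "j \<in> S" for i j
  proof -
    have "(\<Sum>l\<in>S. N i l * M l j) = (\<Sum>l\<in>S. ((if i = l then 1/a else 0) + g) * ((if l = j then a else 0) + b))"
      using that M N unfolding g_def by (intro sum.cong) auto
    also have "\<dots> = (if i = j then 1 else 0) + (a * g + b / a + real (card S) * b * g)"
      using gen[OF that, of "1/a" g a b] a by (simp add: algebra_simps)
    finally show ?thesis using key by simp
  qed
  show ?thesis unfolding is_inv_def using 1 2 by blast
qed

lemma perm_nonid_prod_zero:
  fixes M0 :: "nat \<Rightarrow> nat \<Rightarrow> real"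
  assumes fin: "finite S" and p: "\<pi> permutes S" and nid: "\<pi> \<noteq> id" and x: "x \<in> S"
    and id0: "\<And>i j. i \<in> S \<Longrightarrow> j \<in> S \<Longrightarrow> M0 i j = (if i = j then 1 else 0)"
  shows "(\<Prod>y\<in>S-{x}. M0 y (\<pi> y)) = 0"
proof -
  obtain y0 where y0: "\<pi> y0 \<noteq> y0" using nid by (metis eq_id_iff)
  have y0S: "y0 \<in> S" using y0 permutes_not_in[OF p, of y0] by blast
  have "\<exists>y\<in>S-{x}. \<pi> y \<noteq> y"
  proof (cases "y0 = x")
    case False then show ?thesis using y0 y0S by blast
  next
    case True
    have "\<pi> x \<in> S" using p x by (simp add: permutes_in_image)
    moreover have "\<pi> x \<noteq> x" using True y0 by simp
    moreover have "\<pi> (\<pi> x) \<noteq> \<pi> x"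
    proof
      assume "\<pi> (\<pi> x) = \<pi> x"
      then have "\<pi> x = x" using permutes_inj[OF p] by (meson injD)
      with \<open>\<pi> x \<noteq> x\<close> show False by simp
    qed
    ultimately show ?thesis by blast
  qed
  then obtain y where y: "y \<in> S - {x}" "\<pi> y \<noteq> y" by blast
  have "M0 y (\<pi> y) = 0" using id0[of y "\<pi> y"] y p by (simp add: permutes_in_image)
  then show ?thesis by (intro prod_zero) (use fin y(1) in auto)
qed

lemma mdet_deriv:
  fixes M :: "real \<Rightarrow> nat \<Rightarrow> nat \<Rightarrow> real"
  assumes fin: "finite S"
    and d: "\<And>i j. i \<in> S \<Longrightarrow> j \<in> S \<Longrightarrow> ((\<lambda>c. M c i j) has_real_derivative M' i j) (at 0)"
    and id0: "\<And>i j. i \<in> S \<Longrightarrow> j \<in> S \<Longrightarrow> M 0 i j = (if i = j then 1 else 0)"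
  shows "((\<lambda>c. mdet S (M c)) has_real_derivative (\<Sum>i\<in>S. M' i i)) (at 0)"
    and "mdet S (M 0) = 1"
proof -
  let ?P = "{\<pi>. \<pi> permutes S}"
  have finP: "finite ?P" using fin by (rule finite_permutations)
  define F where "F \<pi> = of_int (sign \<pi>) * (\<Sum>x\<in>S. M' x (\<pi> x) * (\<Prod>y\<in>S-{x}. M 0 y (\<pi> y)))" for \<pi>
  have D: "((\<lambda>c. mdet S (M c)) has_real_derivative (\<Sum>\<pi>\<in>?P. F \<pi>)) (at 0)"
    unfolding mdet_def F_def
  proof (rule DERIV_sum)
    fix \<pi> assume "\<pi> \<in> ?P"
    then have p: "\<pi> permutes S" by simp
    have "((\<lambda>c. \<Prod>i\<in>S. M c i (\<pi> i)) has_real_derivative (\<Sum>x\<in>S. M' x (\<pi> x) * (\<Prod>y\<in>S-{x}. M 0 y (\<pi> y)))) (at 0)"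
    proof (rule has_field_derivative_prod)
      fix x assume "x \<in> S"
      then show "((\<lambda>c. M c x (\<pi> x)) has_real_derivative M' x (\<pi> x)) (at 0)"
        by (intro d) (auto simp: permutes_in_image[OF p])
    qed
    then show "((\<lambda>c. of_int (sign \<pi>) * (\<Prod>i\<in>S. M c i (\<pi> i))) has_real_derivative
        of_int (sign \<pi>) * (\<Sum>x\<in>S. M' x (\<pi> x) * (\<Prod>y\<in>S-{x}. M 0 y (\<pi> y)))) (at 0)"
      by (rule DERIV_cmult)
  qed
  have Fv: "F \<pi> = (if \<pi> = id then (\<Sum>i\<in>S. M' i i) else 0)" if "\<pi> \<in> ?P" for \<pi>
  proof (cases "\<pi> = id")
    case True
    have "(\<Prod>y\<in>S-{x}. M 0 y (\<pi> y)) = 1" if "x \<in> S" for x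
      using id0 True by (intro prod.neutral) auto
    then show ?thesis unfolding F_def using True by (auto intro!: sum.cong)
  next
    case False
    have "(\<Prod>y\<in>S-{x}. M 0 y (\<pi> y)) = 0" if "x \<in> S" for x
      using perm_nonid_prod_zero[OF fin _ False that, of "M 0"] \<open>\<pi> \<in> ?P\<close> id0 by auto
    then show ?thesis unfolding F_def using False by simp
  qed
  have "(\<Sum>\<pi>\<in>?P. F \<pi>) = (\<Sum>\<pi>\<in>?P. (if \<pi> = id then (\<Sum>i\<in>S. M' i i) else 0))"
    using Fv by (intro sum.cong) auto
  also have "\<dots> = (\<Sum>i\<in>S. M' i i)" using finP by (simp add: sum.delta')
  finally show "((\<lambda>c. mdet S (M c)) has_real_derivative (\<Sum>i\<in>S. M' i i)) (at 0)" using D by simp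
  have G: "of_int (sign \<pi>) * (\<Prod>i\<in>S. M 0 i (\<pi> i)) = (if \<pi> = id then 1 else 0)" if "\<pi> \<in> ?P" for \<pi>
  proof (cases "\<pi> = id")
    case True then show ?thesis using id0 by (auto intro!: prod.neutral)
  next
    case False
    obtain y0 where y0: "\<pi> y0 \<noteq> y0" using False by (metis eq_id_iff)
    have y0S: "y0 \<in> S" using y0 permutes_not_in[of \<pi> S y0] that by auto
    have "M 0 y0 (\<pi> y0) = 0" using id0[of y0 "\<pi> y0"] y0 y0S that by (simp add: permutes_in_image)
    then have "(\<Prod>i\<in>S. M 0 i (\<pi> i)) = 0" by (intro prod_zero) (use fin y0S in auto)
    then show ?thesis using False by simp
  qed
  have "mdet S (M 0) = (\<Sum>\<pi>\<in>?P. (if \<pi> = id then 1 else 0))"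
    unfolding mdet_def using G by (intro sum.cong) auto
  also have "\<dots> = 1" using finP by (simp add: sum.delta')
  finally show "mdet S (M 0) = 1" .
qed

lemma mvt_quot_bound:
  fixes g g' :: "real \<Rightarrow> real"
  assumes c: "c \<noteq> 0" "\<bar>c\<bar> < \<delta>"
    and der: "\<And>t. \<bar>t\<bar> < \<delta> \<Longrightarrow> (g has_real_derivative g' t) (at t)"
    and bnd: "\<And>t. \<bar>t\<bar> < \<delta> \<Longrightarrow> \<bar>g' t\<bar> \<le> B"
  shows "\<bar>(g c - g 0) / c\<bar> \<le> B"
proof (cases "c > 0")
  case True
  have "\<exists>z. 0 < z \<and> z < c \<and> g c - g 0 = (c - 0) * g' z"
    by (rule MVT2) (use True c in \<open>auto intro!: der\<close>)
  then obtain z where z: "0 < z" "z < c" "g c - g 0 = c * g' z" by auto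
  then have "(g c - g 0) / c = g' z" using c by simp
  moreover have "\<bar>z\<bar> < \<delta>" using z c by auto
  ultimately show ?thesis using bnd by simp
next
  case False
  then have cn: "c < 0" using c by simp
  have "\<exists>z. c < z \<and> z < 0 \<and> g 0 - g c = (0 - c) * g' z"
    by (rule MVT2) (use cn c in \<open>auto intro!: der\<close>)
  then obtain z where z: "c < z" "z < 0" "g 0 - g c = (0 - c) * g' z" by auto
  then have "(g c - g 0) / c = g' z" using c by (simp add: field_simps)
  moreover have "\<bar>z\<bar> < \<delta>" using z c by auto
  ultimately show ?thesis using bnd by simp
qed

lemma deriv_under_integral:
  fixes f f' :: "real \<Rightarrow> 'a \<Rightarrow> real" and G :: "'a \<Rightarrow> real"
  assumes \<delta>: "\<delta> > 0"
    and int: "\<And>c. \<bar>c\<bar> < \<delta> \<Longrightarrow> integrable M (f c)"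
    and der: "\<And>c x. \<bar>c\<bar> < \<delta> \<Longrightarrow> x \<in> space M \<Longrightarrow> ((\<lambda>c. f c x) has_real_derivative f' c x) (at c)"
    and bnd: "\<And>c x. \<bar>c\<bar> < \<delta> \<Longrightarrow> x \<in> space M \<Longrightarrow> \<bar>f' c x\<bar> \<le> G x"
    and G: "integrable M G"
    and meas: "f' 0 \<in> borel_measurable M"
  shows "((\<lambda>c. \<integral>x. f c x \<partial>M) has_real_derivative (\<integral>x. f' 0 x \<partial>M)) (at 0)"
proof -
  let ?F = "\<lambda>c. \<integral>x. f c x \<partial>M"
  have ball: "at (0::real) within ball 0 \<delta> = at 0" using \<delta> by (intro at_within_open) auto
  have "((\<lambda>y. (?F y - ?F 0) / (y - 0)) \<longlongrightarrow> (\<integral>x. f' 0 x \<partial>M)) (at 0 within ball 0 \<delta>)"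
    unfolding tendsto_at_iff_sequentially
  proof (intro allI impI)
    fix X :: "nat \<Rightarrow> real"
    assume X: "\<forall>i. X i \<in> ball 0 \<delta> - {0}" and X0: "X \<longlonglongrightarrow> 0"
    have Xi: "X i \<noteq> 0" "\<bar>X i\<bar> < \<delta>" for i using X[rule_format, of i] by auto
    define s where "s i x = (f (X i) x - f 0 x) / X i" for i x
    have f0: "integrable M (f 0)" using int \<delta> by simp
    have lim: "(\<lambda>i. integral\<^sup>L M (s i)) \<longlonglongrightarrow> integral\<^sup>L M (f' 0)"
    proof (rule integral_dominated_convergence[where w = G])
      show "f' 0 \<in> borel_measurable M" by (rule meas)
      show "s i \<in> borel_measurable M" for i
        unfolding s_def using int[OF Xi(2)] f0 by measurable
      show "integrable M G" by (rule G)
      show "AE x in M. (\<lambda>i. s i x) \<longlonglongrightarrow> f' 0 x"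
      proof (rule AE_I2)
        fix x assume x: "x \<in> space M"
        have "((\<lambda>c. f c x) has_real_derivative f' 0 x) (at 0)" using der[OF _ x] \<delta> by simp
        then have "((\<lambda>y. (f y x - f 0 x) / (y - 0)) \<longlongrightarrow> f' 0 x) (at 0 within UNIV)"
          by (simp add: has_field_derivative_iff)
        then have "((\<lambda>y. (f y x - f 0 x) / (y - 0)) \<circ> X) \<longlonglongrightarrow> f' 0 x"
          unfolding tendsto_at_iff_sequentially using Xi X0 by auto
        then show "(\<lambda>i. s i x) \<longlonglongrightarrow> f' 0 x" by (simp add: s_def o_def)
      qed
      show "AE x in M. norm (s i x) \<le> G x" for i
      proof (rule AE_I2)
        fix x assume x: "x \<in> space M"
        show "norm (s i x) \<le> G x" unfolding s_def real_norm_def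
          by (rule mvt_quot_bound[OF Xi(1) Xi(2)]) (use der[OF _ x] bnd[OF _ x] in auto)
      qed
    qed
    have "integral\<^sup>L M (s i) = (?F (X i) - ?F 0) / (X i - 0)" for i
      unfolding s_def using int[OF Xi(2)] f0 by simp
    then show "((\<lambda>y. (?F y - ?F 0) / (y - 0)) \<circ> X) \<longlonglongrightarrow> (\<integral>x. f' 0 x \<partial>M)"
      using lim by (simp add: o_def)
  qed
  then show ?thesis unfolding has_field_derivative_iff ball .
qed

abbreviation PL :: "nat set \<Rightarrow> (nat \<Rightarrow> real) measure" where
  "PL S \<equiv> PiM S (\<lambda>_::nat. (lborel :: real measure))"

lemma exp_sq8_eq: "exp (- (u::real)\<^sup>2 / 8) = sqrt (8 * pi) * normal_density 0 2 u"
  unfolding normal_density_def by (simp add: real_sqrt_mult)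

lemma int_exp8: "integrable lborel (\<lambda>u::real. exp (- u\<^sup>2 / 8))"
  unfolding exp_sq8_eq by simp

lemma int_exp8_sq: "integrable lborel (\<lambda>u::real. u\<^sup>2 * exp (- u\<^sup>2 / 8))"
proof -
  have "integrable lborel (\<lambda>u::real. sqrt (8 * pi) * (normal_density 0 2 u * (u - 0)^2))"
    using integrable_normal_moment[where \<mu>=0 and \<sigma>=2 and k=2] by simp
  then show ?thesis unfolding exp_sq8_eq by (simp add: ac_simps)
qed

lemma exp_sum_prod: fixes x :: "nat \<Rightarrow> real" shows "finite S \<Longrightarrow> exp (- (\<Sum>i\<in>S. (x i)\<^sup>2) / 8) = (\<Prod>i\<in>S. exp (- (x i)\<^sup>2 / 8))"
  by (simp add: exp_sum[symmetric] sum_negf sum_divide_distrib)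

lemma int_gauss_PiM:
  fixes S :: "nat set"
  assumes fin: "finite S"
  shows "integrable (PL S) (\<lambda>x. exp (- (\<Sum>i\<in>S. (x i)\<^sup>2) / 8))"
    and "integrable (PL S) (\<lambda>x. (\<Sum>i\<in>S. (x i)\<^sup>2) * exp (- (\<Sum>i\<in>S. (x i)\<^sup>2) / 8))"
proof -
  show "integrable (PL S) (\<lambda>x. exp (- (\<Sum>i\<in>S. (x i)\<^sup>2) / 8))"
    unfolding exp_sum_prod[OF fin]
    by (rule product_sigma_finite.product_integrable_prod[OF psf fin]) (rule int_exp8)
  have hj: "integrable (PL S) (\<lambda>x. \<Prod>i\<in>S. (if i = j then (x i)\<^sup>2 else 1) * exp (- (x i)\<^sup>2 / 8))" for j
    apply (rule product_sigma_finite.product_integrable_prod[OF psf fin, of "\<lambda>i u. (if i = j then u\<^sup>2 else 1) * exp (- u\<^sup>2 / 8)"])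
    subgoal for i using int_exp8 int_exp8_sq by (cases "i = j") simp_all
    done
  have "integrable (PL S) (\<lambda>x. \<Sum>j\<in>S. \<Prod>i\<in>S. (if i = j then (x i)\<^sup>2 else 1) * exp (- (x i)\<^sup>2 / 8))"
    using hj by simp
  moreover have "(\<Sum>j\<in>S. \<Prod>i\<in>S. (if i = j then (x i)\<^sup>2 else 1) * exp (- (x i)\<^sup>2 / 8))
     = (\<Sum>i\<in>S. (x i)\<^sup>2) * exp (- (\<Sum>i\<in>S. (x i)\<^sup>2) / 8)" for x :: "nat \<Rightarrow> real"
  proof -
    have "(\<Prod>i\<in>S. (if i = j then (x i)\<^sup>2 else 1) * exp (- (x i)\<^sup>2 / 8)) = (x j)\<^sup>2 * exp (- (\<Sum>i\<in>S. (x i)\<^sup>2) / 8)"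
      if "j \<in> S" for j
    proof -
      have "(\<Prod>i\<in>S. (if i = j then (x i)\<^sup>2 else 1) * exp (- (x i)\<^sup>2 / 8))
          = (\<Prod>i\<in>S. (if i = j then (x i)\<^sup>2 else 1)) * (\<Prod>i\<in>S. exp (- (x i)\<^sup>2 / 8))"
        by (rule prod.distrib)
      also have "(\<Prod>i\<in>S. (if i = j then (x i)\<^sup>2 else 1)) = (x j)\<^sup>2"
        using fin that by (simp add: prod.delta)
      finally show ?thesis using exp_sum_prod[OF fin, of x] by simp
    qed
    then show ?thesis by (simp add: sum_distrib_right)
  qed
  ultimately show "integrable (PL S) (\<lambda>x. (\<Sum>i\<in>S. (x i)\<^sup>2) * exp (- (\<Sum>i\<in>S. (x i)\<^sup>2) / 8))"
    by simp
qed

definition qf :: "nat set \<Rightarrow> real \<Rightarrow> real \<Rightarrow> real \<Rightarrow> (nat \<Rightarrow> real) \<Rightarrow> real" where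
  "qf S a g m x = a * (\<Sum>i\<in>S. (x i - m)\<^sup>2) + g * (\<Sum>i\<in>S. (x i - m))\<^sup>2"

definition qd :: "nat set \<Rightarrow> real \<Rightarrow> real \<Rightarrow> real \<Rightarrow> real \<Rightarrow> real \<Rightarrow> real \<Rightarrow> (nat \<Rightarrow> real) \<Rightarrow> real" where
  "qd S a a' g g' m m' x = a' * (\<Sum>i\<in>S. (x i - m)\<^sup>2) + g' * (\<Sum>i\<in>S. (x i - m))\<^sup>2
      - 2 * m' * (a * (\<Sum>i\<in>S. (x i - m)) + g * real (card S) * (\<Sum>i\<in>S. (x i - m)))"

lemma qf_deriv:
  assumes "(\<alpha> has_real_derivative a') (at c)" "(\<gamma> has_real_derivative g') (at c)" "(\<mu> has_real_derivative m') (at c)"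
  shows "((\<lambda>c. qf S (\<alpha> c) (\<gamma> c) (\<mu> c) x) has_real_derivative qd S (\<alpha> c) a' (\<gamma> c) g' (\<mu> c) m' x) (at c)"
  unfolding qf_def
  apply (rule derivative_eq_intros assms refl | simp)+
  apply (simp add: qd_def sum_distrib_left sum_distrib_right sum_negf sum_subtractf algebra_simps)
  done

lemma sq_lower: "(u - m)\<^sup>2 \<ge> (u::real)\<^sup>2 / 2 - m\<^sup>2"
proof -
  have "(u - m)\<^sup>2 - (u\<^sup>2 / 2 - m\<^sup>2) = (u - 2*m)\<^sup>2 / 2" by (simp add: power2_eq_square algebra_simps)
  then show ?thesis using zero_le_power2[of "u - 2*m"] by linarith
qed

lemma sq_upper: "(u - m)\<^sup>2 \<le> 2 * (u::real)\<^sup>2 + 2 * m\<^sup>2"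
proof -
  have "2 * u\<^sup>2 + 2 * m\<^sup>2 - (u - m)\<^sup>2 = (u + m)\<^sup>2" by (simp add: power2_eq_square algebra_simps)
  then show ?thesis using zero_le_power2[of "u + m"] by linarith
qed

lemma abs_le_sq: "\<bar>u::real\<bar> \<le> 1 + u\<^sup>2"
proof -
  have "(\<bar>u\<bar> - 1/2)\<^sup>2 = \<bar>u\<bar>\<^sup>2 - \<bar>u\<bar> + 1/4" by (simp add: power2_eq_square algebra_simps)
  moreover have "\<bar>u\<bar>\<^sup>2 = u\<^sup>2" by simp
  ultimately show ?thesis using zero_le_power2[of "\<bar>u\<bar> - 1/2"] by linarith
qed

lemma qf_lower:
  fixes S :: "nat set" and x :: "nat \<Rightarrow> real"
  assumes fin: "finite S" and a: "a - real (card S) * \<bar>g\<bar> \<ge> 1/2" and m: "\<bar>m\<bar> \<le> K"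
  shows "qf S a g m x \<ge> (\<Sum>i\<in>S. (x i)\<^sup>2) / 4 - real (card S) * K\<^sup>2 / 2"
proof -
  define s where "s = (\<Sum>i\<in>S. (x i - m)\<^sup>2)"
  define t where "t = (\<Sum>i\<in>S. (x i - m))"
  have s0: "s \<ge> 0" unfolding s_def by (intro sum_nonneg) auto
  have ts: "t\<^sup>2 \<le> s * real (card S)" unfolding s_def t_def by (rule sum_squared_le_sum_of_squares)
  have "g * t\<^sup>2 \<ge> - \<bar>g\<bar> * (s * real (card S))"
  proof -
    have "\<bar>g\<bar> * t\<^sup>2 \<le> \<bar>g\<bar> * (s * real (card S))" using ts by (simp add: mult_left_mono)
    moreover have "g * t\<^sup>2 \<ge> - (\<bar>g\<bar> * t\<^sup>2)"
    proof -
      have "- \<bar>g\<bar> \<le> g" by linarith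
      then have "(- \<bar>g\<bar>) * t\<^sup>2 \<le> g * t\<^sup>2" by (rule mult_right_mono) simp
      then show ?thesis by simp
    qed
    ultimately show ?thesis by linarith
  qed
  then have "qf S a g m x \<ge> (a - real (card S) * \<bar>g\<bar>) * s"
    unfolding qf_def s_def[symmetric] t_def[symmetric] by (simp add: algebra_simps)
  moreover have "(a - real (card S) * \<bar>g\<bar>) * s \<ge> s / 2"
  proof -
    have "(1/2) * s \<le> (a - real (card S) * \<bar>g\<bar>) * s" using a s0 by (rule mult_right_mono)
    then show ?thesis by simp
  qed
  moreover have "s \<ge> (\<Sum>i\<in>S. (x i)\<^sup>2) / 2 - real (card S) * K\<^sup>2"
  proof -
    have "s \<ge> (\<Sum>i\<in>S. (x i)\<^sup>2 / 2 - m\<^sup>2)" unfolding s_def by (intro sum_mono sq_lower)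
    also have "(\<Sum>i\<in>S. (x i)\<^sup>2 / 2 - m\<^sup>2) = (\<Sum>i\<in>S. (x i)\<^sup>2) / 2 - real (card S) * m\<^sup>2"
      by (simp add: sum_subtractf sum_divide_distrib)
    moreover have "m\<^sup>2 \<le> K\<^sup>2" using power_mono[OF m abs_ge_zero, of 2] by simp
    then have "real (card S) * m\<^sup>2 \<le> real (card S) * K\<^sup>2" by (intro mult_left_mono) auto
    ultimately show ?thesis by linarith
  qed
  ultimately show ?thesis by linarith
qed

lemma qd_bound:
  fixes S :: "nat set" and x :: "nat \<Rightarrow> real"
  assumes fin: "finite S" and K: "K \<ge> 0"
    and b: "\<bar>a\<bar> \<le> K" "\<bar>a'\<bar> \<le> K" "\<bar>g\<bar> \<le> K" "\<bar>g'\<bar> \<le> K" "\<bar>m\<bar> \<le> K" "\<bar>m'\<bar> \<le> K"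
  defines "n \<equiv> real (card S)"
  shows "\<bar>qd S a a' g g' m m' x\<bar> \<le> (K + K * n + 2 * K\<^sup>2 * (1 + n)) * (2 * (\<Sum>i\<in>S. (x i)\<^sup>2) + 2 * n * K\<^sup>2) + 2 * K\<^sup>2 * (1 + n) * n"
proof -
  define s where "s = (\<Sum>i\<in>S. (x i - m)\<^sup>2)"
  define t where "t = (\<Sum>i\<in>S. (x i - m))"
  define X where "X = (\<Sum>i\<in>S. (x i)\<^sup>2)"
  have n0: "n \<ge> 0" unfolding n_def by simp
  have s0: "s \<ge> 0" unfolding s_def by (intro sum_nonneg) auto
  have ts: "t\<^sup>2 \<le> s * n" unfolding s_def t_def n_def by (rule sum_squared_le_sum_of_squares)
  have tabs: "\<bar>t\<bar> \<le> n + s"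
  proof -
    have "\<bar>t\<bar> \<le> (\<Sum>i\<in>S. \<bar>x i - m\<bar>)" unfolding t_def by (rule sum_abs)
    also have "\<dots> \<le> (\<Sum>i\<in>S. 1 + (x i - m)\<^sup>2)" by (intro sum_mono abs_le_sq)
    also have "\<dots> = n + s" unfolding n_def s_def by (simp add: sum.distrib)
    finally show ?thesis .
  qed
  have sX: "s \<le> 2 * X + 2 * n * K\<^sup>2"
  proof -
    have "s \<le> (\<Sum>i\<in>S. 2 * (x i)\<^sup>2 + 2 * m\<^sup>2)" unfolding s_def by (intro sum_mono sq_upper)
    also have "\<dots> = 2 * X + 2 * n * m\<^sup>2" unfolding X_def n_def by (simp add: sum.distrib sum_distrib_left)
    finally have "s \<le> 2 * X + 2 * n * m\<^sup>2" .
    moreover have "m\<^sup>2 \<le> K\<^sup>2" using power_mono[OF b(5) abs_ge_zero, of 2] by simp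
    then have "2 * X + 2 * n * m\<^sup>2 \<le> 2 * X + 2 * n * K\<^sup>2" using n0 by (simp add: mult_left_mono)
    ultimately show ?thesis by linarith
  qed
  have qd_eq: "qd S a a' g g' m m' x = a' * s + g' * t\<^sup>2 - 2 * m' * (a * t + g * n * t)"
    unfolding qd_def s_def t_def n_def by simp
  have e1: "\<bar>a' * s\<bar> \<le> K * s" using b(2) s0 by (simp add: abs_mult mult_right_mono)
  have e2: "\<bar>g' * t\<^sup>2\<bar> \<le> K * (s * n)"
  proof -
    have "\<bar>g' * t\<^sup>2\<bar> = \<bar>g'\<bar> * t\<^sup>2" by (simp add: abs_mult)
    also have "\<dots> \<le> K * t\<^sup>2" using b(4) by (simp add: mult_right_mono)
    also have "\<dots> \<le> K * (s * n)" using ts K by (simp add: mult_left_mono)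
    finally show ?thesis .
  qed
  have e3: "\<bar>2 * m' * (a * t + g * n * t)\<bar> \<le> 2 * K * (K + K * n) * (n + s)"
  proof -
    have "\<bar>a * t + g * n * t\<bar> \<le> \<bar>a\<bar> * \<bar>t\<bar> + \<bar>g\<bar> * n * \<bar>t\<bar>"
      using n0 by (simp add: abs_mult abs_triangle_ineq[THEN order_trans])
    also have "\<dots> \<le> K * \<bar>t\<bar> + K * n * \<bar>t\<bar>"
      using b(1,3) n0 by (intro add_mono mult_right_mono) auto
    also have "\<dots> = (K + K * n) * \<bar>t\<bar>" by (simp add: algebra_simps)
    also have "\<dots> \<le> (K + K * n) * (n + s)" using tabs K n0 by (intro mult_left_mono) auto
    finally have h: "\<bar>a * t + g * n * t\<bar> \<le> (K + K * n) * (n + s)" .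
    have "\<bar>2 * m' * (a * t + g * n * t)\<bar> = 2 * \<bar>m'\<bar> * \<bar>a * t + g * n * t\<bar>" by (simp add: abs_mult)
    also have "\<dots> \<le> 2 * K * ((K + K * n) * (n + s))"
      using b(6) h by (intro mult_mono) auto
    finally show ?thesis by simp
  qed
  have "\<bar>qd S a a' g g' m m' x\<bar> \<le> K * s + K * (s * n) + 2 * K * (K + K * n) * (n + s)"
    unfolding qd_eq using e1 e2 e3 by linarith
  also have "\<dots> = (K + K * n + 2 * K\<^sup>2 * (1 + n)) * s + 2 * K\<^sup>2 * (1 + n) * n"
    by (simp add: power2_eq_square algebra_simps)
  also have "\<dots> \<le> (K + K * n + 2 * K\<^sup>2 * (1 + n)) * (2 * X + 2 * n * K\<^sup>2) + 2 * K\<^sup>2 * (1 + n) * n"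
    using sX K n0 by (intro add_right_mono mult_left_mono) auto
  finally show ?thesis unfolding X_def .
qed

lemma meas_f1:
  fixes S :: "nat set" and T :: "real set"
  assumes T: "T \<in> sets borel"
  shows "(\<lambda>x. (\<Prod>i\<in>S. indicator T (x i)) * exp (- qf S a g m x / 2) * (- qd S a a' g g' m m' x / 2)) \<in> borel_measurable (PL S)"
  unfolding qf_def qd_def using T by measurable

lemma meas_f2:
  fixes S :: "nat set" and T :: "real set"
  assumes T: "T \<in> sets borel"
  shows "(\<lambda>x. (\<Prod>i\<in>S. indicator T (x i)) * exp (- qf S a g m x / 2)) \<in> borel_measurable (PL S)"
  unfolding qf_def using T by measurable

lemma prod_ind_bounds:
  fixes S :: "nat set" and T :: "real set"
  shows "0 \<le> (\<Prod>i\<in>S. indicator T (x i) :: real)" and "(\<Prod>i\<in>S. indicator T (x i) :: real) \<le> 1"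
   apply (rule prod_nonneg) apply simp
  apply (rule prod_le_1) apply auto
  done

lemma abs_close: "\<bar>x - y\<bar> < e \<Longrightarrow> \<bar>x::real\<bar> \<le> \<bar>y\<bar> + e"
  using abs_triangle_ineq2[of x y] by linarith

lemma gauss_deriv:
  fixes S :: "nat set" and T :: "real set" and \<alpha> \<gamma> \<mu> \<alpha>' \<gamma>' \<mu>' :: "real \<Rightarrow> real"
  assumes fin: "finite S" and T: "T \<in> sets borel"
    and ev: "\<forall>\<^sub>F c in nhds 0. (\<alpha> has_real_derivative \<alpha>' c) (at c) \<and> (\<gamma> has_real_derivative \<gamma>' c) (at c)
               \<and> (\<mu> has_real_derivative \<mu>' c) (at c)"
    and ca: "isCont \<alpha>' 0" and cg: "isCont \<gamma>' 0" and cm: "isCont \<mu>' 0"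
    and a0: "\<alpha> 0 = 1" and g0: "\<gamma> 0 = 0"
  shows "((\<lambda>c. \<integral>x. (\<Prod>i\<in>S. indicator T (x i)) * exp (- qf S (\<alpha> c) (\<gamma> c) (\<mu> c) x / 2) \<partial>PL S)
     has_real_derivative
     (\<integral>x. (\<Prod>i\<in>S. indicator T (x i)) * exp (- qf S 1 0 (\<mu> 0) x / 2)
            * (- qd S 1 (\<alpha>' 0) 0 (\<gamma>' 0) (\<mu> 0) (\<mu>' 0) x / 2) \<partial>PL S)) (at 0)"
proof -
  from ev[unfolded eventually_nhds_metric] obtain d0 where d0: "d0 > 0" and d0D': "\<forall>c. dist c 0 < d0 \<longrightarrow> (\<alpha> has_real_derivative \<alpha>' c) (at c) \<and> (\<gamma> has_real_derivative \<gamma>' c) (at c)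
               \<and> (\<mu> has_real_derivative \<mu>' c) (at c)"
    by (elim exE conjE)
  have d0D: "(\<alpha> has_real_derivative \<alpha>' c) (at c) \<and> (\<gamma> has_real_derivative \<gamma>' c) (at c)
               \<and> (\<mu> has_real_derivative \<mu>' c) (at c)" if "dist c 0 < d0" for c
    using d0D' that by blast
  have D0: "(\<alpha> has_real_derivative \<alpha>' 0) (at 0)" "(\<gamma> has_real_derivative \<gamma>' 0) (at 0)" "(\<mu> has_real_derivative \<mu>' 0) (at 0)"
    using d0D[of 0] d0 by simp_all
  have cA: "isCont \<alpha> 0" "isCont \<gamma> 0" "isCont \<mu> 0" using D0 by (auto intro: DERIV_isCont)
  define n where "n = real (card S)"
  have n0: "n \<ge> 0" unfolding n_def by simp
  define e0 where "e0 = 1 / (4 * (n + 1))"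
  have e0: "e0 > 0" "e0 \<le> 1/4" "n * e0 \<le> 1/4" using n0 unfolding e0_def by (auto simp: field_simps)
  have epsd: "\<exists>d>0. \<forall>c. dist c 0 < d \<longrightarrow> dist (h c) (h 0) < e" if "isCont h 0" "e > 0" for h :: "real \<Rightarrow> real" and e
    using that(1)[unfolded continuous_at_eps_delta] that(2) by blast
  obtain d1 where d1: "d1 > 0" "\<And>c. dist c 0 < d1 \<Longrightarrow> dist (\<alpha> c) (\<alpha> 0) < e0" using epsd[OF cA(1) e0(1)] by blast
  obtain d2 where d2: "d2 > 0" "\<And>c. dist c 0 < d2 \<Longrightarrow> dist (\<gamma> c) (\<gamma> 0) < e0" using epsd[OF cA(2) e0(1)] by blast
  obtain d3 where d3: "d3 > 0" "\<And>c. dist c 0 < d3 \<Longrightarrow> dist (\<mu> c) (\<mu> 0) < 1" using epsd[OF cA(3) zero_less_one] by blast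
  obtain d4 where d4: "d4 > 0" "\<And>c. dist c 0 < d4 \<Longrightarrow> dist (\<alpha>' c) (\<alpha>' 0) < 1" using epsd[OF ca zero_less_one] by blast
  obtain d5 where d5: "d5 > 0" "\<And>c. dist c 0 < d5 \<Longrightarrow> dist (\<gamma>' c) (\<gamma>' 0) < 1" using epsd[OF cg zero_less_one] by blast
  obtain d6 where d6: "d6 > 0" "\<And>c. dist c 0 < d6 \<Longrightarrow> dist (\<mu>' c) (\<mu>' 0) < 1" using epsd[OF cm zero_less_one] by blast
  define \<delta> where "\<delta> = min d0 (min d1 (min d2 (min d3 (min d4 (min d5 d6)))))"
  have \<delta>: "\<delta> > 0" unfolding \<delta>_def using d0 d1(1) d2(1) d3(1) d4(1) d5(1) d6(1) by simp
  define K where "K = 2 + \<bar>\<mu> 0\<bar> + \<bar>\<alpha>' 0\<bar> + \<bar>\<gamma>' 0\<bar> + \<bar>\<mu>' 0\<bar>"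
  have K0: "K \<ge> 0" unfolding K_def by simp
  have B: "\<bar>\<alpha> c\<bar> \<le> K \<and> \<bar>\<alpha>' c\<bar> \<le> K \<and> \<bar>\<gamma> c\<bar> \<le> K \<and> \<bar>\<gamma>' c\<bar> \<le> K \<and> \<bar>\<mu> c\<bar> \<le> K \<and> \<bar>\<mu>' c\<bar> \<le> K
      \<and> \<alpha> c - n * \<bar>\<gamma> c\<bar> \<ge> 1/2" if c: "\<bar>c\<bar> < \<delta>" for c
  proof -
    have dc: "dist c 0 < d1" "dist c 0 < d2" "dist c 0 < d3" "dist c 0 < d4" "dist c 0 < d5" "dist c 0 < d6"
      using c unfolding \<delta>_def by (auto simp: dist_real_def)
    have h1: "\<bar>\<alpha> c - 1\<bar> < e0" using d1(2)[OF dc(1)] a0 by (simp add: dist_real_def)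
    have h2: "\<bar>\<gamma> c\<bar> < e0" using d2(2)[OF dc(2)] g0 by (simp add: dist_real_def)
    have h3: "\<bar>\<mu> c - \<mu> 0\<bar> < 1" using d3(2)[OF dc(3)] by (simp add: dist_real_def)
    have h4: "\<bar>\<alpha>' c - \<alpha>' 0\<bar> < 1" using d4(2)[OF dc(4)] by (simp add: dist_real_def)
    have h5: "\<bar>\<gamma>' c - \<gamma>' 0\<bar> < 1" using d5(2)[OF dc(5)] by (simp add: dist_real_def)
    have h6: "\<bar>\<mu>' c - \<mu>' 0\<bar> < 1" using d6(2)[OF dc(6)] by (simp add: dist_real_def)
    have "n * \<bar>\<gamma> c\<bar> \<le> n * e0" using h2 n0 by (intro mult_left_mono) auto
    then have "\<alpha> c - n * \<bar>\<gamma> c\<bar> \<ge> 1/2" using h1 e0 by linarith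
    moreover have "\<bar>\<alpha> c\<bar> \<le> K" using abs_close[OF h1] e0(2) abs_ge_zero[of "\<mu> 0"] abs_ge_zero[of "\<alpha>' 0"]
        abs_ge_zero[of "\<gamma>' 0"] abs_ge_zero[of "\<mu>' 0"] unfolding K_def by simp
    moreover have "\<bar>\<gamma> c\<bar> \<le> K" using h2 e0(2) abs_ge_zero[of "\<mu> 0"] abs_ge_zero[of "\<alpha>' 0"]
        abs_ge_zero[of "\<gamma>' 0"] abs_ge_zero[of "\<mu>' 0"] unfolding K_def by linarith
    moreover have "\<bar>\<mu> c\<bar> \<le> K" using abs_close[OF h3] abs_ge_zero[of "\<mu> 0"] abs_ge_zero[of "\<alpha>' 0"]
        abs_ge_zero[of "\<gamma>' 0"] abs_ge_zero[of "\<mu>' 0"] unfolding K_def by linarith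
    moreover have "\<bar>\<alpha>' c\<bar> \<le> K" using abs_close[OF h4] abs_ge_zero[of "\<mu> 0"] abs_ge_zero[of "\<alpha>' 0"]
        abs_ge_zero[of "\<gamma>' 0"] abs_ge_zero[of "\<mu>' 0"] unfolding K_def by linarith
    moreover have "\<bar>\<gamma>' c\<bar> \<le> K" using abs_close[OF h5] abs_ge_zero[of "\<mu> 0"] abs_ge_zero[of "\<alpha>' 0"]
        abs_ge_zero[of "\<gamma>' 0"] abs_ge_zero[of "\<mu>' 0"] unfolding K_def by linarith
    moreover have "\<bar>\<mu>' c\<bar> \<le> K" using abs_close[OF h6] abs_ge_zero[of "\<mu> 0"] abs_ge_zero[of "\<alpha>' 0"]
        abs_ge_zero[of "\<gamma>' 0"] abs_ge_zero[of "\<mu>' 0"] unfolding K_def by linarith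
    ultimately show ?thesis by blast
  qed
  define P where "P x = (\<Prod>i\<in>S. indicator T (x i) :: real)" for x :: "nat \<Rightarrow> real"
  define X where "X x = (\<Sum>i\<in>S. (x i)\<^sup>2)" for x :: "nat \<Rightarrow> real"
  define C1 where "C1 = K + K * n + 2 * K\<^sup>2 * (1 + n)"
  define C0 where "C0 = 2 * K\<^sup>2 * (1 + n) * n"
  define E where "E = exp (n * K\<^sup>2 / 4)"
  define f where "f c x = P x * exp (- qf S (\<alpha> c) (\<gamma> c) (\<mu> c) x / 2)" for c x
  define f' where "f' c x = P x * exp (- qf S (\<alpha> c) (\<gamma> c) (\<mu> c) x / 2)
            * (- qd S (\<alpha> c) (\<alpha>' c) (\<gamma> c) (\<gamma>' c) (\<mu> c) (\<mu>' c) x / 2)" for c x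
  define G where "G x = E * exp (- X x / 8) * ((C1 * (2 * X x + 2 * n * K\<^sup>2) + C0) / 2)" for x
  have C10: "C1 \<ge> 0" "C0 \<ge> 0" unfolding C1_def C0_def using K0 n0 by auto
  have X0: "X x \<ge> 0" for x unfolding X_def by (intro sum_nonneg) auto
  have expb: "exp (- qf S (\<alpha> c) (\<gamma> c) (\<mu> c) x / 2) \<le> E * exp (- X x / 8)" if c: "\<bar>c\<bar> < \<delta>" for c x
  proof -
    have "qf S (\<alpha> c) (\<gamma> c) (\<mu> c) x \<ge> X x / 4 - n * K\<^sup>2 / 2"
      unfolding X_def n_def by (rule qf_lower[OF fin]) (use B[OF c] n_def in auto)
    then have "- qf S (\<alpha> c) (\<gamma> c) (\<mu> c) x / 2 \<le> n * K\<^sup>2 / 4 + (- X x / 8)" by simp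
    then have "exp (- qf S (\<alpha> c) (\<gamma> c) (\<mu> c) x / 2) \<le> exp (n * K\<^sup>2 / 4 + (- X x / 8))" by simp
    also have "exp (n * K\<^sup>2 / 4 + (- X x / 8)) = E * exp (- X x / 8)" unfolding E_def by (rule exp_add)
    finally show ?thesis .
  qed
  have qdb: "\<bar>qd S (\<alpha> c) (\<alpha>' c) (\<gamma> c) (\<gamma>' c) (\<mu> c) (\<mu>' c) x\<bar> \<le> C1 * (2 * X x + 2 * n * K\<^sup>2) + C0"
    if c: "\<bar>c\<bar> < \<delta>" for c x
    unfolding C1_def C0_def X_def n_def by (rule qd_bound[OF fin K0]) (use B[OF c] in auto)
  have Pb: "0 \<le> P x" "P x \<le> 1" for x unfolding P_def by (rule prod_ind_bounds)+
  have int8: "integrable (PL S) (\<lambda>x. exp (- X x / 8))" unfolding X_def by (rule int_gauss_PiM(1)[OF fin])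
  have int8': "integrable (PL S) (\<lambda>x. X x * exp (- X x / 8))" unfolding X_def by (rule int_gauss_PiM(2)[OF fin])
  have intf: "integrable (PL S) (f c)" if c: "\<bar>c\<bar> < \<delta>" for c
  proof -
    have i1: "integrable (PL S) (\<lambda>x. E * exp (- X x / 8))" using int8 by simp
    have m1: "f c \<in> borel_measurable (PL S)" unfolding f_def P_def by (rule meas_f2[OF T])
    have a1: "AE x in PL S. norm (f c x) \<le> norm (E * exp (- X x / 8))"
    proof (rule AE_I2)
      fix x
      have "\<bar>f c x\<bar> = P x * exp (- qf S (\<alpha> c) (\<gamma> c) (\<mu> c) x / 2)" unfolding f_def using Pb by simp
      also have "\<dots> \<le> 1 * (E * exp (- X x / 8))" using Pb expb[OF c] by (intro mult_mono) auto
      finally show "norm (f c x) \<le> norm (E * exp (- X x / 8))" unfolding E_def by simp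
    qed
    show ?thesis by (rule Bochner_Integration.integrable_bound[OF i1 m1 a1])
  qed
  have intG: "integrable (PL S) G"
  proof -
    have Geq: "G = (\<lambda>x. (E * ((C1 * (2 * n * K\<^sup>2) + C0) / 2)) * exp (- X x / 8) + (E * C1) * (X x * exp (- X x / 8)))"
      unfolding G_def by (rule ext) (simp add: algebra_simps add_divide_distrib)
    show ?thesis unfolding Geq using int8 int8' by simp
  qed
  have derf: "((\<lambda>c. f c x) has_real_derivative f' c x) (at c)" if c: "\<bar>c\<bar> < \<delta>" for c x
  proof -
    have dd: "(\<alpha> has_real_derivative \<alpha>' c) (at c)" "(\<gamma> has_real_derivative \<gamma>' c) (at c)" "(\<mu> has_real_derivative \<mu>' c) (at c)"
      using d0D[of c] c unfolding \<delta>_def by (auto simp: dist_real_def)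
    have q: "((\<lambda>c. qf S (\<alpha> c) (\<gamma> c) (\<mu> c) x) has_real_derivative qd S (\<alpha> c) (\<alpha>' c) (\<gamma> c) (\<gamma>' c) (\<mu> c) (\<mu>' c) x) (at c)"
      by (rule qf_deriv[OF dd])
    show ?thesis unfolding f_def f'_def
      by (auto intro!: derivative_eq_intros q)
  qed
  have bndf: "\<bar>f' c x\<bar> \<le> G x" if c: "\<bar>c\<bar> < \<delta>" for c x
  proof -
    have "\<bar>f' c x\<bar> = P x * exp (- qf S (\<alpha> c) (\<gamma> c) (\<mu> c) x / 2) * (\<bar>qd S (\<alpha> c) (\<alpha>' c) (\<gamma> c) (\<gamma>' c) (\<mu> c) (\<mu>' c) x\<bar> / 2)"
      unfolding f'_def using Pb by (simp add: abs_mult)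
    also have "\<dots> \<le> 1 * (E * exp (- X x / 8)) * ((C1 * (2 * X x + 2 * n * K\<^sup>2) + C0) / 2)"
      using Pb expb[OF c] qdb[OF c] by (intro mult_mono) (auto simp: E_def)
    finally show ?thesis unfolding G_def by simp
  qed
  have "((\<lambda>c. \<integral>x. f c x \<partial>PL S) has_real_derivative (\<integral>x. f' 0 x \<partial>PL S)) (at 0)"
  proof (rule deriv_under_integral[OF \<delta>])
    show "f' 0 \<in> borel_measurable (PL S)" unfolding f'_def P_def by (rule meas_f1[OF T])
  qed (use intf derf bndf intG in auto)
  then show ?thesis unfolding f_def f'_def P_def a0 g0 .
qed

definition hh :: "real set \<Rightarrow> real \<Rightarrow> bool \<Rightarrow> real \<Rightarrow> real" where
  "hh T m b u = indicator T u * exp (- (u - m)\<^sup>2 / 2) * (if b then u - m else 1)"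

lemma exp_half_eq: "exp (- (u - m)\<^sup>2 / 2) = sqrt (2 * pi) * normal_density m 1 u"
  unfolding normal_density_def by simp

lemma hh_int: assumes T: "T \<in> sets borel" shows "integrable lborel (hh T m b)"
proof -
  have i0: "integrable lborel (\<lambda>u. normal_density m 1 u * (u - m) ^ k)" for k
    by (rule integrable_normal_moment) simp
  have "integrable lborel (\<lambda>u. indicator T u *\<^sub>R (sqrt (2 * pi) * (normal_density m 1 u * (u - m) ^ (if b then 1 else 0))))"
    using T i0 by (intro integrable_mult_indicator integrable_mult_right) auto
  moreover have "(\<lambda>u. indicator T u *\<^sub>R (sqrt (2 * pi) * (normal_density m 1 u * (u - m) ^ (if b then 1 else 0)))) = hh T m b"
    unfolding hh_def exp_half_eq by (rule ext) auto
  ultimately show ?thesis by simp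
qed

lemma prod_hh_integral:
  fixes S :: "nat set"
  assumes fin: "finite S" and F: "F \<subseteq> S" and T: "T \<in> sets borel"
  shows "integrable (PL S) (\<lambda>x. \<Prod>l\<in>S. hh T m (l \<in> F) (x l))"
    and "(\<integral>x. (\<Prod>l\<in>S. hh T m (l \<in> F) (x l)) \<partial>PL S)
          = (integral\<^sup>L lborel (hh T m True)) ^ card F * (integral\<^sup>L lborel (hh T m False)) ^ (card S - card F)"
proof -
  show "integrable (PL S) (\<lambda>x. \<Prod>l\<in>S. hh T m (l \<in> F) (x l))"
    by (rule product_sigma_finite.product_integrable_prod[OF psf fin]) (rule hh_int[OF T])
  have "(\<integral>x. (\<Prod>l\<in>S. hh T m (l \<in> F) (x l)) \<partial>PL S) = (\<Prod>l\<in>S. integral\<^sup>L lborel (hh T m (l \<in> F)))"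
    by (rule product_sigma_finite.product_integral_prod[OF psf fin]) (rule hh_int[OF T])
  also have "\<dots> = (\<Prod>l\<in>S. if l \<in> F then integral\<^sup>L lborel (hh T m True) else integral\<^sup>L lborel (hh T m False))"
    by (intro prod.cong) auto
  also have "\<dots> = (integral\<^sup>L lborel (hh T m True)) ^ card (S \<inter> {l. l \<in> F}) * (integral\<^sup>L lborel (hh T m False)) ^ card (S \<inter> - {l. l \<in> F})"
    using fin by (simp add: prod.If_cases)
  also have "S \<inter> {l. l \<in> F} = F" using F by auto
  also have "S \<inter> - {l. l \<in> F} = S - F" by auto
  also have "card (S - F) = card S - card F" using F fin by (simp add: card_Diff_subset finite_subset)
  finally show "(\<integral>x. (\<Prod>l\<in>S. hh T m (l \<in> F) (x l)) \<partial>PL S)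
          = (integral\<^sup>L lborel (hh T m True)) ^ card F * (integral\<^sup>L lborel (hh T m False)) ^ (card S - card F)" .
qed

lemma prod_hh_eq:
  fixes S :: "nat set" and x :: "nat \<Rightarrow> real"
  assumes fin: "finite S" and F: "F \<subseteq> S"
  shows "(\<Prod>l\<in>S. hh T m (l \<in> F) (x l))
       = (\<Prod>i\<in>S. indicator T (x i)) * exp (- (\<Sum>i\<in>S. (x i - m)\<^sup>2) / 2) * (\<Prod>l\<in>F. x l - m)"
proof -
  have "(\<Prod>l\<in>S. hh T m (l \<in> F) (x l))
      = (\<Prod>l\<in>S. indicator T (x l)) * (\<Prod>l\<in>S. exp (- (x l - m)\<^sup>2 / 2)) * (\<Prod>l\<in>S. if l \<in> F then x l - m else 1)"
    unfolding hh_def by (simp add: prod.distrib)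
  also have "(\<Prod>l\<in>S. exp (- (x l - m)\<^sup>2 / 2)) = exp (- (\<Sum>i\<in>S. (x i - m)\<^sup>2) / 2)"
    using fin by (simp add: exp_sum[symmetric] sum_negf sum_divide_distrib)
  also have "(\<Prod>l\<in>S. if l \<in> F then x l - m else 1) = (\<Prod>l\<in>F. x l - m)"
    using fin F Int_absorb2[OF F] by (simp add: prod.If_cases Int_absorb1 Int_commute[of S] flip: Collect_mem_eq)
  finally show ?thesis .
qed

lemma sq_sum_split:
  fixes y :: "nat \<Rightarrow> real"
  assumes fin: "finite S"
  shows "(\<Sum>i\<in>S. y i)\<^sup>2 = (\<Sum>i\<in>S. (y i)\<^sup>2) + (\<Sum>i\<in>S. \<Sum>j\<in>S-{i}. y i * y j)"
proof -
  have "(\<Sum>i\<in>S. y i)\<^sup>2 = (\<Sum>i\<in>S. \<Sum>j\<in>S. y i * y j)"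
    by (simp add: power2_eq_square sum_product)
  also have "\<dots> = (\<Sum>i\<in>S. (y i)\<^sup>2 + (\<Sum>j\<in>S-{i}. y i * y j))"
  proof (rule sum.cong[OF refl])
    fix i assume "i \<in> S"
    then show "(\<Sum>j\<in>S. y i * y j) = (y i)\<^sup>2 + (\<Sum>j\<in>S-{i}. y i * y j)"
      using fin by (simp add: sum.remove power2_eq_square)
  qed
  also have "\<dots> = (\<Sum>i\<in>S. (y i)\<^sup>2) + (\<Sum>i\<in>S. \<Sum>j\<in>S-{i}. y i * y j)"
    by (rule sum.distrib)
  finally show ?thesis .
qed

lemma DJ_formula:
  fixes S :: "nat set" and T :: "real set"
  assumes fin: "finite S" and T: "T \<in> sets borel" and ag: "a' + g' = 0"
  shows "(\<integral>x. (\<Prod>i\<in>S. indicator T (x i)) * exp (- qf S 1 0 m x / 2) * (- qd S 1 a' 0 g' m m' x / 2) \<partial>PL S)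
    = - (g' / 2) * (real (card S) * (real (card S) - 1) * (integral\<^sup>L lborel (hh T m True))\<^sup>2
                 * (integral\<^sup>L lborel (hh T m False)) ^ (card S - 2))
      + m' * (real (card S) * integral\<^sup>L lborel (hh T m True) * (integral\<^sup>L lborel (hh T m False)) ^ (card S - 1))"
proof -
  define A0 where "A0 = integral\<^sup>L lborel (hh T m False)"
  define A1 where "A1 = integral\<^sup>L lborel (hh T m True)"
  define Q where "Q F x = (\<Prod>l\<in>S. hh T m (l \<in> F) (x l))" for F and x :: "nat \<Rightarrow> real"
  define P where "P x = (\<Prod>i\<in>S. indicator T (x i) :: real)" for x :: "nat \<Rightarrow> real"
  define e where "e x = exp (- (\<Sum>i\<in>S. (x i - m)\<^sup>2) / 2)" for x :: "nat \<Rightarrow> real"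
  have Q2: "Q {i, j} x = P x * e x * ((x i - m) * (x j - m))" if "i \<in> S" "j \<in> S" "i \<noteq> j" for i j x
    unfolding Q_def P_def e_def using that by (subst prod_hh_eq[OF fin]) auto
  have Q1: "Q {i} x = P x * e x * (x i - m)" if "i \<in> S" for i x
    unfolding Q_def P_def e_def using that by (subst prod_hh_eq[OF fin]) auto
  have pw: "P x * exp (- qf S 1 0 m x / 2) * (- qd S 1 a' 0 g' m m' x / 2)
      = - (g' / 2) * (\<Sum>i\<in>S. \<Sum>j\<in>S-{i}. Q {i, j} x) + m' * (\<Sum>i\<in>S. Q {i} x)" for x
  proof -
    define y where "y i = x i - m" for i
    have sp: "(\<Sum>i\<in>S. y i)\<^sup>2 = (\<Sum>i\<in>S. (y i)\<^sup>2) + (\<Sum>i\<in>S. \<Sum>j\<in>S-{i}. y i * y j)"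
      by (rule sq_sum_split[OF fin])
    define D where "D = (\<Sum>i\<in>S. \<Sum>j\<in>S-{i}. y i * y j)"
    define t where "t = (\<Sum>i\<in>S. y i)"
    define s2 where "s2 = (\<Sum>i\<in>S. (y i)\<^sup>2)"
    have h1: "(\<Sum>i\<in>S. \<Sum>j\<in>S-{i}. Q {i, j} x) = P x * e x * D"
      unfolding D_def sum_distrib_left y_def by (intro sum.cong refl Q2) auto
    have h2: "(\<Sum>i\<in>S. Q {i} x) = P x * e x * t"
      unfolding t_def sum_distrib_left y_def by (intro sum.cong refl Q1) auto
    have h3: "exp (- qf S 1 0 m x / 2) = e x" unfolding qf_def e_def by simp
    have "qd S 1 a' 0 g' m m' x = a' * s2 + g' * t\<^sup>2 - 2 * m' * t"
      unfolding qd_def y_def s2_def t_def by simp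
    also have "\<dots> = (a' + g') * s2 + g' * D - 2 * m' * t" using sp unfolding D_def s2_def t_def
      by (simp add: algebra_simps)
    also have "\<dots> = g' * D - 2 * m' * t" using ag by simp
    finally have h4: "qd S 1 a' 0 g' m m' x = g' * D - 2 * m' * t" .
    show ?thesis unfolding h1 h2 h3 h4 by (simp add: field_simps)
  qed
  have intQ: "integrable (PL S) (Q F)" if "F \<subseteq> S" for F
    unfolding Q_def by (rule prod_hh_integral(1)[OF fin that T])
  have intQv: "integral\<^sup>L (PL S) (Q F) = A1 ^ card F * A0 ^ (card S - card F)" if "F \<subseteq> S" for F
    unfolding Q_def A0_def A1_def by (rule prod_hh_integral(2)[OF fin that T])
  have "(\<integral>x. P x * exp (- qf S 1 0 m x / 2) * (- qd S 1 a' 0 g' m m' x / 2) \<partial>PL S)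
      = (\<integral>x. - (g' / 2) * (\<Sum>i\<in>S. \<Sum>j\<in>S-{i}. Q {i, j} x) + m' * (\<Sum>i\<in>S. Q {i} x) \<partial>PL S)"
    using pw by simp
  also have "\<dots> = - (g' / 2) * (\<Sum>i\<in>S. \<Sum>j\<in>S-{i}. integral\<^sup>L (PL S) (Q {i, j})) + m' * (\<Sum>i\<in>S. integral\<^sup>L (PL S) (Q {i}))"
  proof -
    have i2: "integrable (PL S) (\<lambda>x. \<Sum>i\<in>S. \<Sum>j\<in>S-{i}. Q {i, j} x)"
      apply (rule Bochner_Integration.integrable_sum) apply (rule Bochner_Integration.integrable_sum) apply (rule intQ) by auto
    have i1: "integrable (PL S) (\<lambda>x. \<Sum>i\<in>S. Q {i} x)"
      apply (rule Bochner_Integration.integrable_sum) apply (rule intQ) by auto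
    have s2: "(\<integral>x. (\<Sum>i\<in>S. \<Sum>j\<in>S-{i}. Q {i, j} x) \<partial>PL S) = (\<Sum>i\<in>S. \<Sum>j\<in>S-{i}. integral\<^sup>L (PL S) (Q {i, j}))"
    proof -
      have "(\<integral>x. (\<Sum>i\<in>S. \<Sum>j\<in>S-{i}. Q {i, j} x) \<partial>PL S) = (\<Sum>i\<in>S. \<integral>x. (\<Sum>j\<in>S-{i}. Q {i, j} x) \<partial>PL S)"
        using intQ by (intro Bochner_Integration.integral_sum) auto
      also have "\<dots> = (\<Sum>i\<in>S. \<Sum>j\<in>S-{i}. integral\<^sup>L (PL S) (Q {i, j}))"
        using intQ by (intro sum.cong refl Bochner_Integration.integral_sum) auto
      finally show ?thesis .
    qed
    have s1: "(\<integral>x. (\<Sum>i\<in>S. Q {i} x) \<partial>PL S) = (\<Sum>i\<in>S. integral\<^sup>L (PL S) (Q {i}))"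
      using intQ by (intro Bochner_Integration.integral_sum) auto
    show ?thesis using i1 i2 s1 s2 by simp
  qed
  also have "(\<Sum>i\<in>S. \<Sum>j\<in>S-{i}. integral\<^sup>L (PL S) (Q {i, j})) = real (card S) * (real (card S) - 1) * A1\<^sup>2 * A0 ^ (card S - 2)"
  proof -
    have "(\<Sum>i\<in>S. \<Sum>j\<in>S-{i}. integral\<^sup>L (PL S) (Q {i, j})) = (\<Sum>i\<in>S. \<Sum>j\<in>S-{i}. A1\<^sup>2 * A0 ^ (card S - 2))"
      by (intro sum.cong refl) (auto simp: intQv power2_eq_square numeral_2_eq_2)
    also have "\<dots> = (\<Sum>i\<in>S. (real (card S) - 1) * (A1\<^sup>2 * A0 ^ (card S - 2)))"
    proof (rule sum.cong[OF refl])
      fix i assume "i \<in> S"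
      then have "card (S - {i}) = card S - 1" "card S \<ge> 1" using fin by (auto simp: card_gt_0_iff Suc_le_eq)
      then show "(\<Sum>j\<in>S-{i}. A1\<^sup>2 * A0 ^ (card S - 2)) = (real (card S) - 1) * (A1\<^sup>2 * A0 ^ (card S - 2))"
        by (simp add: of_nat_diff)
    qed
    also have "\<dots> = real (card S) * (real (card S) - 1) * A1\<^sup>2 * A0 ^ (card S - 2)" by simp
    finally show ?thesis .
  qed
  also have "(\<Sum>i\<in>S. integral\<^sup>L (PL S) (Q {i})) = real (card S) * A1 * A0 ^ (card S - 1)"
    by (simp add: intQv)
  finally show ?thesis unfolding P_def A0_def A1_def .
qed

lemma A1_sym: "integral\<^sup>L lborel (hh {-L..L} 0 True) = 0"
proof -
  let ?f = "hh {-L..L} 0 True"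
  have "integral\<^sup>L lborel ?f = \<bar>-1::real\<bar> *\<^sub>R (\<integral>x. ?f (0 + (-1) * x) \<partial>lborel)"
    by (rule lborel_integral_real_affine) simp
  also have "(\<lambda>x. ?f (0 + (-1) * x)) = (\<lambda>x. - ?f x)"
    by (rule ext) (auto simp: hh_def indicator_def)
  finally have "integral\<^sup>L lborel ?f = - integral\<^sup>L lborel ?f" by simp
  then show ?thesis by simp
qed

lemma einterval_Iio: "einterval (-\<infinity>) (ereal t) = {..<t}"
  by (auto simp: einterval_def)

lemma A1_half: "integral\<^sup>L lborel (hh {..<t} m True) = - exp (- (t - m)\<^sup>2 / 2)"
proof -
  define f where "f x = exp (- (x - m)\<^sup>2 / 2) * (x - m)" for x :: real
  define F where "F x = - exp (- (x - m)\<^sup>2 / 2)" for x :: real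
  have fint: "integrable lborel f"
  proof -
    have i: "integrable lborel (\<lambda>x. normal_density m 1 x * (x - m) ^ 1)"
      using integrable_normal_moment[where \<mu>=m and \<sigma>=1 and k=1] by simp
    have "integrable lborel (\<lambda>x. sqrt (2 * pi) * (normal_density m 1 x * (x - m) ^ 1))"
      using i by (rule integrable_mult_right)
    moreover have "(\<lambda>x. sqrt (2 * pi) * (normal_density m 1 x * (x - m) ^ 1)) = f"
      unfolding f_def exp_half_eq by (rule ext) simp
    ultimately show ?thesis by metis
  qed
  have "(LBINT x=-\<infinity>..ereal t. f x) = F t - 0"
  proof (rule interval_integral_FTC_integrable)
    show "-\<infinity> < ereal t" by simp
    show "(F has_vector_derivative f x) (at x)" for x
      unfolding F_def f_def has_real_derivative_iff_has_vector_derivative[symmetric]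
      by (auto intro!: derivative_eq_intros simp: field_simps)
    show "isCont f x" for x unfolding f_def by (auto intro!: continuous_intros)
    show "set_integrable lborel (einterval (-\<infinity>) (ereal t)) f"
      unfolding set_integrable_def using fint by (intro integrable_mult_indicator) auto
    have "(F \<longlongrightarrow> 0) at_bot" unfolding F_def by real_asymp
    then show "((F \<circ> real_of_ereal) \<longlongrightarrow> 0) (at_right (-\<infinity>))"
      by (simp add: ereal_tendsto_simps1)
    have "(F \<longlongrightarrow> F t) (at_left t)" unfolding F_def
      by (auto intro!: tendsto_intros)
    then show "((F \<circ> real_of_ereal) \<longlongrightarrow> F t) (at_left (ereal t))"
      by (simp add: ereal_tendsto_simps1)
  qed
  moreover have "(LBINT x=-\<infinity>..ereal t. f x) = integral\<^sup>L lborel (hh {..<t} m True)"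
    unfolding interval_lebesgue_integral_def set_lebesgue_integral_def einterval_Iio hh_def f_def
    by (simp add: mult_ac)
  ultimately show ?thesis unfolding F_def by simp
qed

lemma A0_cdf: "integral\<^sup>L lborel (hh {..<t} m False) = sqrt (2 * pi) * std_normal_cdf (t - m)"
proof -
  let ?f = "hh {..<t} m False"
  have "integral\<^sup>L lborel ?f = \<bar>1::real\<bar> *\<^sub>R (\<integral>x. ?f (m + 1 * x) \<partial>lborel)"
    by (rule lborel_integral_real_affine) simp
  also have "(\<lambda>x. ?f (m + 1 * x)) = (\<lambda>x. sqrt (2 * pi) * (indicator {..<t - m} x * std_normal_density x))"
    by (rule ext) (auto simp: hh_def indicator_def std_normal_density_def)
  also have "(\<integral>x. sqrt (2 * pi) * (indicator {..<t - m} x * std_normal_density x) \<partial>lborel)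
      = sqrt (2 * pi) * (\<integral>x. indicator {..<t - m} x * std_normal_density x \<partial>lborel)"
    by simp
  also have "(\<integral>x. indicator {..<t - m} x * std_normal_density x \<partial>lborel)
      = (\<integral>x. indicator {..t - m} x * std_normal_density x \<partial>lborel)"
  proof (rule integral_cong_AE)
    show "AE x in lborel. indicator {..<t - m} x * std_normal_density x = indicator {..t - m} x * std_normal_density x"
      using AE_lborel_singleton[of "t - m"] by eventually_elim (auto simp: indicator_def)
  qed auto
  also have "\<dots> = std_normal_cdf (t - m)"
    unfolding std_normal_cdf_def set_lebesgue_integral_def by simp
  finally show ?thesis by simp
qed

lemma cdf_pos: "std_normal_cdf x > 0"
proof -
  define c0 where "c0 = (1 / sqrt (2 * pi)) * exp (- (\<bar>x\<bar> + 1)\<^sup>2 / 2)"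
  have c0: "c0 > 0" unfolding c0_def by simp
  have int1: "integrable lborel (\<lambda>s. indicator {..x} s * std_normal_density s)"
  proof -
    have "integrable lborel (std_normal_density)" using integrable_normal_density[where \<mu>=0 and \<sigma>=1] by simp
    then have "integrable lborel (\<lambda>s. indicator {..x} s *\<^sub>R std_normal_density s)"
      by (intro integrable_mult_indicator) auto
    then show ?thesis by simp
  qed
  have int2: "integrable lborel (\<lambda>s. indicator {x - 1..x} s * c0)"
    by (intro integrable_mult_left integrable_real_indicator) auto
  have le: "indicator {x - 1..x} s * c0 \<le> indicator {..x} s * std_normal_density s" for s
  proof (cases "s \<in> {x - 1..x}")
    case True
    then have "\<bar>s\<bar> \<le> \<bar>x\<bar> + 1" by auto
    then have "s\<^sup>2 \<le> (\<bar>x\<bar> + 1)\<^sup>2" using power_mono[of "\<bar>s\<bar>" "\<bar>x\<bar> + 1" 2] by simp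
    then have "exp (- (\<bar>x\<bar> + 1)\<^sup>2 / 2) \<le> exp (- s\<^sup>2 / 2)" by simp
    then have "c0 \<le> std_normal_density s" unfolding c0_def std_normal_density_def
      by (intro mult_left_mono) auto
    then show ?thesis using True by (simp add: indicator_def)
  next
    case False then show ?thesis by (simp add: indicator_def)
  qed
  have "(\<integral>s. indicator {x - 1..x} s * c0 \<partial>lborel) = c0"
    by (simp add: measure_lborel_Icc)
  moreover have "(\<integral>s. indicator {x - 1..x} s * c0 \<partial>lborel) \<le> (\<integral>s. indicator {..x} s * std_normal_density s \<partial>lborel)"
    by (rule integral_mono[OF int2 int1 le])
  ultimately show ?thesis unfolding std_normal_cdf_def set_lebesgue_integral_def using c0 by simp
qed

lemma mdet_cong:
  assumes "\<And>i j. i \<in> S \<Longrightarrow> j \<in> S \<Longrightarrow> M i j = M' i j"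
  shows "mdet S M = mdet S M'"
  unfolding mdet_def
proof (intro sum.cong refl)
  fix \<pi> assume "\<pi> \<in> {\<pi>. \<pi> permutes S}"
  then have "\<pi> i \<in> S" if "i \<in> S" for i using that by (simp add: permutes_in_image)
  then show "of_int (sign \<pi>) * (\<Prod>i\<in>S. M i (\<pi> i)) = of_int (sign \<pi>) * (\<Prod>i\<in>S. M' i (\<pi> i))"
    using assms by (metis (no_types, lifting) prod.cong)
qed

lemma indicator_all:
  fixes S :: "nat set" and T :: "real set" and x :: "nat \<Rightarrow> real"
  assumes fin: "finite S"
  shows "(indicator {x. \<forall>i\<in>S. x i \<in> T} x :: real) = (\<Prod>i\<in>S. indicator T (x i))"
proof (cases "\<forall>i\<in>S. x i \<in> T")
  case True
  then have "(\<Prod>i\<in>S. indicator T (x i) :: real) = 1" by (intro prod.neutral) auto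
  then show ?thesis using True by simp
next
  case False
  then obtain i where "i \<in> S" "x i \<notin> T" by blast
  then have "(\<Prod>i\<in>S. indicator T (x i) :: real) = 0" using fin by (intro prod_zero bexI[of _ i]) auto
  then show ?thesis using False by simp
qed

lemma quad_form:
  fixes S :: "nat set" and x mu :: "nat \<Rightarrow> real"
  assumes fin: "finite S" and mu: "\<And>i. i \<in> S \<Longrightarrow> mu i = m"
    and W: "\<And>i j. i \<in> S \<Longrightarrow> j \<in> S \<Longrightarrow> W i j = (if i = j then a else 0) + g"
  shows "(\<Sum>i\<in>S. \<Sum>j\<in>S. (x i - mu i) * W i j * (x j - mu j)) = qf S a g m x"
proof -
  have "(\<Sum>i\<in>S. \<Sum>j\<in>S. (x i - mu i) * W i j * (x j - mu j))
      = (\<Sum>i\<in>S. \<Sum>j\<in>S. (if i = j then a * (x i - m)\<^sup>2 else 0) + g * ((x i - m) * (x j - m)))"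
    using mu W by (intro sum.cong refl) (auto simp: power2_eq_square algebra_simps)
  also have "\<dots> = (\<Sum>i\<in>S. a * (x i - m)\<^sup>2 + g * ((x i - m) * (\<Sum>j\<in>S. (x j - m))))"
    using fin by (simp add: sum.distrib sum_distrib_left)
  also have "\<dots> = a * (\<Sum>i\<in>S. (x i - m)\<^sup>2) + g * (\<Sum>i\<in>S. (x i - m))\<^sup>2"
    by (simp add: sum.distrib sum_distrib_left sum_distrib_right power2_eq_square mult_ac)
  finally show ?thesis unfolding qf_def .
qed

lemma mvn_prob_eq:
  fixes S :: "nat set" and T :: "real set" and mu :: "nat \<Rightarrow> real"
  assumes fin: "finite S" and mu: "\<And>i. i \<in> S \<Longrightarrow> mu i = m"
    and W: "\<And>i j. i \<in> S \<Longrightarrow> j \<in> S \<Longrightarrow> minv S Sg i j = (if i = j then a else 0) + g"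
    and E: "E = {x. \<forall>i\<in>S. x i \<in> T}"
  shows "mvn_prob S mu Sg E = (\<integral>x. (\<Prod>i\<in>S. indicator T (x i)) * exp (- qf S a g m x / 2) \<partial>PL S)
           / sqrt ((2 * pi) ^ card S * mdet S Sg)"
proof -
  have "mvn_prob S mu Sg E = (\<integral>x. (\<Prod>i\<in>S. indicator T (x i)) * exp (- qf S a g m x / 2)
           / sqrt ((2 * pi) ^ card S * mdet S Sg) \<partial>PL S)"
    unfolding mvn_prob_def set_lebesgue_integral_def mvn_density_def E
    by (intro Bochner_Integration.integral_cong refl) (simp add: indicator_all[OF fin] quad_form[OF fin mu W])
  then show ?thesis by simp
qed

definition den :: "nat \<Rightarrow> real \<Rightarrow> real" where "den k c = 1 - c + real k * c"
definition aij :: "nat \<Rightarrow> real \<Rightarrow> nat \<Rightarrow> nat \<Rightarrow> real" where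
  "aij k c i j = (if i = j then 1 / (1 - c) else 0) + (- c / ((1 - c) * den k c))"

lemma cs_corr_aIbJ: "cs_corr c i j = (if i = j then 1 - c else 0) + c"
  unfolding cs_corr_def by simp

lemma is_inv_A:
  assumes fin: "finite A" and c1: "1 - c \<noteq> 0" and cd: "den (card A) c \<noteq> 0"
  shows "is_inv A (cs_corr c) (aij (card A) c)"
proof (rule inv_aIbJ[OF fin c1])
  show "1 - c + real (card A) * c \<noteq> 0" using cd unfolding den_def .
  show "cs_corr c i j = (if i = j then 1 - c else 0) + c" for i j by (rule cs_corr_aIbJ)
  show "aij (card A) c i j = (if i = j then 1 / (1 - c) else 0) + - c / ((1 - c) * (1 - c + real (card A) * c))" for i j
    unfolding aij_def den_def ..
qed

lemma Ainv_eq: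
  assumes fin: "finite A" and c1: "1 - c \<noteq> 0" and cd: "den (card A) c \<noteq> 0" and ij: "i \<in> A" "j \<in> A"
  shows "minv A (cs_corr c) i j = aij (card A) c i j"
  by (rule minv_unique[OF fin is_inv_A[OF fin c1 cd] ij])

lemma Ainv_inv:
  assumes fin: "finite A" and c1: "1 - c \<noteq> 0" and cd: "den (card A) c \<noteq> 0" and ij: "i \<in> A" "j \<in> A"
  shows "minv A (minv A (cs_corr c)) i j = cs_corr c i j"
proof -
  have "is_inv A (cs_corr c) (minv A (cs_corr c))" by (rule minv_is_inv[OF is_inv_A[OF fin c1 cd]])
  then have "is_inv A (minv A (cs_corr c)) (cs_corr c)" by (rule is_inv_sym)
  then show ?thesis by (rule minv_unique[OF fin _ ij])
qed

lemma frac_aux: "(a::real) \<noteq> 0 \<Longrightarrow> d \<noteq> 0 \<Longrightarrow> 1 / a + k * (- c / (a * d)) = (d - k * c) / (a * d)"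
  by (simp add: field_simps)

lemma aij_rowsum:
  assumes fin: "finite A" and c1: "1 - c \<noteq> 0" and cd: "den (card A) c \<noteq> 0" and i: "i \<in> A"
  shows "(\<Sum>j\<in>A. aij (card A) c i j) = 1 / den (card A) c"
proof -
  have "(\<Sum>j\<in>A. aij (card A) c i j) = (\<Sum>j\<in>A. (if i = j then 1 / (1 - c) else 0)) + real (card A) * (- c / ((1 - c) * den (card A) c))"
    unfolding aij_def by (simp only: sum.distrib sum_constant)
  also have "(\<Sum>j\<in>A. (if i = j then 1 / (1 - c) else 0)) = 1 / (1 - c)"
    using fin i by (simp add: sum.delta)
  also have "1 / (1 - c) + real (card A) * (- c / ((1 - c) * den (card A) c)) = 1 / den (card A) c"
  proof -
    have e: "den (card A) c - real (card A) * c = 1 - c" unfolding den_def by simp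
    have "1 / (1 - c) + real (card A) * (- c / ((1 - c) * den (card A) c))
        = (den (card A) c - real (card A) * c) / ((1 - c) * den (card A) c)"
      using frac_aux[OF c1 cd] .
    also have "\<dots> = 1 / den (card A) c" unfolding e using c1 cd by simp
    finally show ?thesis .
  qed
  finally show ?thesis .
qed

lemma PS_eq:
  assumes fin: "finite A" and k: "card A = k" and beta: "beta > 0"
    and c1: "1 - c \<noteq> 0" and cd: "den k c \<noteq> 0"
  shows "PS n lam c A (\<lambda>_. beta) =
    (\<integral>x. (\<Prod>i\<in>A. indicator {..<sqrt (real n) * beta} (x i)) * exp (- qf A (1 - c) c (lam * sqrt (real n) / den k c) x / 2) \<partial>PL A)
      / sqrt ((2 * pi) ^ k * mdet A (aij k c))"
proof -
  define mu0 where "mu0 i = lam * sqrt (real n) * (\<Sum>j\<in>A. minv A (cs_corr c) i j)" for i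
  have "PS n lam c A (\<lambda>_. beta) = mvn_prob A mu0 (minv A (cs_corr c)) {u. \<forall>i\<in>A. u i < sqrt (real n) * beta}"
    unfolding PS_def Let_def mu0_def using beta by simp
  also have "\<dots> = (\<integral>x. (\<Prod>i\<in>A. indicator {..<sqrt (real n) * beta} (x i)) * exp (- qf A (1 - c) c (lam * sqrt (real n) / den k c) x / 2) \<partial>PL A)
      / sqrt ((2 * pi) ^ card A * mdet A (minv A (cs_corr c)))"
  proof (rule mvn_prob_eq[OF fin])
    fix i assume i: "i \<in> A"
    have "(\<Sum>j\<in>A. minv A (cs_corr c) i j) = (\<Sum>j\<in>A. aij k c i j)"
      using Ainv_eq[OF fin c1] cd i k by (intro sum.cong) auto
    also have "\<dots> = 1 / den k c" using aij_rowsum[OF fin c1] cd i k by auto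
    finally show "mu0 i = lam * sqrt (real n) / den k c" unfolding mu0_def by simp
  next
    fix i j assume "i \<in> A" "j \<in> A"
    then show "minv A (minv A (cs_corr c)) i j = (if i = j then 1 - c else 0) + c"
      using Ainv_inv[OF fin c1] cd k cs_corr_aIbJ by auto
  qed auto
  also have "mdet A (minv A (cs_corr c)) = mdet A (aij k c)"
    using Ainv_eq[OF fin c1] cd k by (intro mdet_cong) auto
  finally show ?thesis using k by simp
qed

lemma ev_small: "(r::real) > 0 \<Longrightarrow> eventually (\<lambda>c. \<bar>c\<bar> < r) (nhds 0)"
  unfolding eventually_nhds_metric by (intro exI[of _ r]) (auto simp: dist_real_def)

lemma small_good:
  assumes "\<bar>c\<bar> < 1 / (real p + 1)" and "k \<le> p"
  shows "1 - c > 0" "den k c > 0" "1 - c + real p * c > 0"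
proof -
  have p0: "real p + 1 > 0" by simp
  have "\<bar>c\<bar> * (real p + 1) < 1" using assms(1) p0 by (simp add: field_simps)
  then have h: "\<bar>c\<bar> * real p + \<bar>c\<bar> < 1" by (simp add: algebra_simps)
  have kp: "real k \<le> real p" using assms(2) by simp
  have "\<bar>c\<bar> * real k \<le> \<bar>c\<bar> * real p" using kp by (intro mult_left_mono) auto
  have "\<bar>c * real p\<bar> = \<bar>c\<bar> * real p" by (simp add: abs_mult)
  have "\<bar>real k * c\<bar> = \<bar>c\<bar> * real k" by (simp add: abs_mult)
  have "\<bar>c\<bar> * real p \<ge> 0" by simp
  show "1 - c > 0" using h \<open>\<bar>c\<bar> * real p \<ge> 0\<close> abs_ge_self[of c] by linarith
  show "den k c > 0" unfolding den_def
    using h \<open>\<bar>c\<bar> * real k \<le> \<bar>c\<bar> * real p\<close> \<open>\<bar>real k * c\<bar> = \<bar>c\<bar> * real k\<close> abs_ge_minus_self[of "real k * c"] abs_ge_minus_self[of c] by linarith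
  have "\<bar>real p * c\<bar> = \<bar>c\<bar> * real p" by (simp add: abs_mult)
  then show "1 - c + real p * c > 0"
    using h abs_ge_minus_self[of "real p * c"] abs_ge_minus_self[of c] by linarith
qed

lemma mu_deriv: "den k c \<noteq> 0 \<Longrightarrow> ((\<lambda>c. L / den k c) has_real_derivative (- L * (real k - 1) / (den k c)\<^sup>2)) (at c)"
  unfolding den_def
  by (auto intro!: derivative_eq_intros simp: power2_eq_square field_simps)

lemma aij_deriv:
  shows "((\<lambda>c. aij k c i j) has_real_derivative ((if i = j then 1 else 0) - 1)) (at 0)"
proof -
  have d1: "((\<lambda>c. 1 / (1 - c)) has_real_derivative 1) (at (0::real))"
    by (auto intro!: derivative_eq_intros)
  have d2: "((\<lambda>c. - c / ((1 - c) * den k c)) has_real_derivative -1) (at (0::real))"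
    unfolding den_def by (auto intro!: derivative_eq_intros)
  show ?thesis
  proof (cases "i = j")
    case True
    have "((\<lambda>c. 1 / (1 - c) + - c / ((1 - c) * den k c)) has_real_derivative 1 + -1) (at 0)"
      by (rule DERIV_add[OF d1 d2])
    then show ?thesis using True unfolding aij_def by simp
  next
    case False
    have "((\<lambda>c. 0 + - c / ((1 - c) * den k c)) has_real_derivative 0 + -1) (at 0)"
      by (rule DERIV_add[OF DERIV_const d2])
    then show ?thesis using False unfolding aij_def by simp
  qed
qed

lemma aij0: "aij k 0 i j = (if i = j then 1 else 0)"
  unfolding aij_def den_def by simp

lemma DJ_nonneg:
  fixes k :: nat and L tau :: real
  assumes k: "k \<ge> 1" and L: "L > 0"
    and hyp: "2 * L \<ge> std_normal_density tau / std_normal_cdf tau"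
  shows "0 \<le> - (1 / 2) * (real k * (real k - 1) * (- exp (- tau\<^sup>2 / 2))\<^sup>2 * (sqrt (2 * pi) * std_normal_cdf tau) ^ (k - 2))
      + (- L * (real k - 1)) * (real k * (- exp (- tau\<^sup>2 / 2)) * (sqrt (2 * pi) * std_normal_cdf tau) ^ (k - 1))"
proof (cases "k = 1")
  case True then show ?thesis by simp
next
  case False
  then have k2: "k \<ge> 2" using k by simp
  define e where "e = exp (- tau\<^sup>2 / 2)"
  define B where "B = sqrt (2 * pi) * std_normal_cdf tau"
  have Phi: "std_normal_cdf tau > 0" by (rule cdf_pos)
  have e0: "e > 0" unfolding e_def by simp
  have B0: "B > 0" unfolding B_def using Phi by simp
  have pw: "B ^ (k - 1) = B * B ^ (k - 2)"
  proof -
    have "k - 1 = Suc (k - 2)" using k2 by simp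
    then show ?thesis by simp
  qed
  have phi: "std_normal_density tau = e / sqrt (2 * pi)" unfolding e_def std_normal_density_def by simp
  have "std_normal_density tau \<le> 2 * L * std_normal_cdf tau"
    using hyp Phi by (simp add: divide_le_eq)
  then have "e / sqrt (2 * pi) \<le> 2 * L * std_normal_cdf tau" unfolding phi .
  then have "e \<le> 2 * L * B" unfolding B_def by (simp add: divide_le_eq mult_ac)
  then have LB: "L * B - e / 2 \<ge> 0" by simp
  have kk: "real k * (real k - 1) \<ge> 0" using k by simp
  have "- (1 / 2) * (real k * (real k - 1) * (- e)\<^sup>2 * B ^ (k - 2)) + (- L * (real k - 1)) * (real k * (- e) * B ^ (k - 1))
      = (real k * (real k - 1)) * e * B ^ (k - 2) * (L * B - e / 2)"
    unfolding pw by (simp add: power2_eq_square algebra_simps)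
  also have "\<dots> \<ge> 0" using kk e0 B0 LB k by (intro mult_nonneg_nonneg) auto
  finally show ?thesis unfolding e_def B_def by simp
qed

lemma PS_deriv:
  fixes n k :: nat and A :: "nat set" and beta lam :: real
  assumes fin: "finite A" and k: "card A = k" and k1: "k \<ge> 1" and beta: "beta > 0" and lam: "lam > 0"
    and n: "n \<ge> 1"
    and hyp: "2 * (lam * sqrt (real n)) \<ge> std_normal_density (sqrt (real n) * (beta - lam))
          / std_normal_cdf (sqrt (real n) * (beta - lam))"
  shows "\<exists>D. ((\<lambda>c. PS n lam c A (\<lambda>_. beta)) has_real_derivative D) (at 0) \<and> D \<ge> 0"
proof -
  define L where "L = lam * sqrt (real n)"
  define t where "t = sqrt (real n) * beta"
  define T where "T = {..<t}"
  have T: "T \<in> sets borel" unfolding T_def by simp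
  define J where "J c = (\<integral>x. (\<Prod>i\<in>A. indicator T (x i)) * exp (- qf A (1 - c) c (L / den k c) x / 2) \<partial>PL A)" for c
  define A0 where "A0 = integral\<^sup>L lborel (hh T L False)"
  define A1 where "A1 = integral\<^sup>L lborel (hh T L True)"
  define DJ where "DJ = - (1 / 2) * (real k * (real k - 1) * A1\<^sup>2 * A0 ^ (k - 2)) + (- L * (real k - 1)) * (real k * A1 * A0 ^ (k - 1))"
  have den0: "den k 0 = 1" unfolding den_def by simp
  have evd: "\<forall>\<^sub>F c in nhds 0. den k c \<noteq> 0"
  proof -
    have "\<forall>\<^sub>F c in nhds 0. \<bar>c\<bar> < 1 / (real k + 1)" by (rule ev_small) simp
    then show ?thesis
    proof eventually_elim
      case (elim c)
      show ?case using small_good(2)[OF elim, of k] by simp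
    qed
  qed
  have g: "(J has_real_derivative
     (\<integral>x. (\<Prod>i\<in>A. indicator T (x i)) * exp (- qf A 1 0 (L / den k 0) x / 2)
            * (- qd A 1 (-1) 0 1 (L / den k 0) (- L * (real k - 1) / (den k 0)\<^sup>2) x / 2) \<partial>PL A)) (at 0)"
  proof -
    have ev': "\<forall>\<^sub>F c in nhds 0. ((\<lambda>c. 1 - c) has_real_derivative (\<lambda>_. -1) c) (at c) \<and> ((\<lambda>c. c) has_real_derivative (\<lambda>_. 1) c) (at c)
        \<and> ((\<lambda>c. L / den k c) has_real_derivative (\<lambda>c. - L * (real k - 1) / (den k c)\<^sup>2) c) (at c)"
      using evd
    proof eventually_elim
      case (elim c)
      have "((\<lambda>c. 1 - c) has_real_derivative -1) (at c)" by (auto intro!: derivative_eq_intros)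
      moreover have "((\<lambda>c. c) has_real_derivative 1) (at c)" by (auto intro!: derivative_eq_intros)
      ultimately show ?case using mu_deriv[OF elim, of L] by simp
    qed
    have c3: "isCont (\<lambda>c. - L * (real k - 1) / (den k c)\<^sup>2) 0"
      using den0 unfolding den_def by (auto intro!: continuous_intros)
    have c1: "isCont (\<lambda>_. - 1 :: real) 0" and c2: "isCont (\<lambda>_. 1 :: real) 0" by auto
    note gd = gauss_deriv[OF fin T ev' c1 c2 c3]
    show ?thesis unfolding J_def by (rule gd) simp_all
  qed
  have DJv: "(\<integral>x. (\<Prod>i\<in>A. indicator T (x i)) * exp (- qf A 1 0 (L / den k 0) x / 2)
            * (- qd A 1 (-1) 0 1 (L / den k 0) (- L * (real k - 1) / (den k 0)\<^sup>2) x / 2) \<partial>PL A) = DJ"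
    unfolding den0 DJ_def A0_def A1_def using DJ_formula[OF fin T, of "-1" 1 L "- L * (real k - 1)"] k by simp
  have dJ: "(J has_real_derivative DJ) (at 0)" using g DJv by simp
  have dd: "((\<lambda>c. mdet A (aij k c)) has_real_derivative (\<Sum>i\<in>A. (if i = i then 1 else 0) - 1)) (at 0)"
    by (rule mdet_deriv(1)[OF fin aij_deriv aij0])
  then have ddet: "((\<lambda>c. mdet A (aij k c)) has_real_derivative 0) (at 0)" by simp
  have det0: "mdet A (aij k 0) = 1" by (rule mdet_deriv(2)[OF fin aij_deriv aij0])
  have pos: "(2 * pi) ^ k * mdet A (aij k 0) > 0" unfolding det0 by simp
  have dR: "((\<lambda>c. J c / sqrt ((2 * pi) ^ k * mdet A (aij k c))) has_real_derivative DJ / sqrt ((2 * pi) ^ k)) (at 0)"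
  proof -
    define s0 where "s0 = sqrt ((2 * pi) ^ k :: real)"
    have s0: "s0 > 0" unfolding s0_def by simp
    have inner: "((\<lambda>c. (2 * pi) ^ k * mdet A (aij k c)) has_real_derivative (2 * pi) ^ k * 0) (at 0)"
      by (rule DERIV_cmult[OF ddet])
    have ds: "((\<lambda>c. sqrt ((2 * pi) ^ k * mdet A (aij k c))) has_real_derivative
        inverse (sqrt ((2 * pi) ^ k * mdet A (aij k 0))) / 2 * ((2 * pi) ^ k * 0)) (at 0)"
      by (rule DERIV_chain2[OF DERIV_real_sqrt[OF pos] inner])
    have ds0: "((\<lambda>c. sqrt ((2 * pi) ^ k * mdet A (aij k c))) has_real_derivative 0) (at 0)"
      using ds by simp
    have sv: "sqrt ((2 * pi) ^ k * mdet A (aij k 0)) = s0" unfolding det0 s0_def by simp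
    have "((\<lambda>c. J c / sqrt ((2 * pi) ^ k * mdet A (aij k c))) has_real_derivative
        (DJ * sqrt ((2 * pi) ^ k * mdet A (aij k 0)) - J 0 * 0) / (sqrt ((2 * pi) ^ k * mdet A (aij k 0)) * sqrt ((2 * pi) ^ k * mdet A (aij k 0)))) (at 0)"
      by (rule DERIV_divide[OF dJ ds0]) (use sv s0 in simp)
    then show ?thesis unfolding sv s0_def[symmetric] using s0 by (simp add: field_simps)
  qed
  have ev: "\<forall>\<^sub>F c in nhds 0. PS n lam c A (\<lambda>_. beta) = J c / sqrt ((2 * pi) ^ k * mdet A (aij k c))"
  proof -
    have "\<forall>\<^sub>F c in nhds 0. \<bar>c\<bar> < 1 / (real k + 1)" by (rule ev_small) simp
    then show ?thesis
    proof eventually_elim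
      case (elim c)
      have "1 - c \<noteq> 0" "den k c \<noteq> 0" using small_good(1,2)[OF elim, of k] by auto
      then show ?case unfolding J_def T_def t_def L_def by (rule PS_eq[OF fin k beta])
    qed
  qed
  have dPS: "((\<lambda>c. PS n lam c A (\<lambda>_. beta)) has_real_derivative DJ / sqrt ((2 * pi) ^ k)) (at 0)"
    using dR DERIV_cong_ev[OF refl ev refl] by simp
  have tau: "t - L = sqrt (real n) * (beta - lam)" unfolding t_def L_def by (simp add: algebra_simps)
  have A1v: "A1 = - exp (- (sqrt (real n) * (beta - lam))\<^sup>2 / 2)"
    unfolding A1_def T_def A1_half tau ..
  have A0v: "A0 = sqrt (2 * pi) * std_normal_cdf (sqrt (real n) * (beta - lam))"
    unfolding A0_def T_def A0_cdf tau ..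
  have "DJ \<ge> 0" unfolding DJ_def A1v A0v
    by (rule DJ_nonneg[OF k1]) (use lam n hyp in \<open>auto simp: L_def\<close>)
  then have "DJ / sqrt ((2 * pi) ^ k) \<ge> 0" by simp
  then show ?thesis using dPS by blast
qed

definition bb :: "nat \<Rightarrow> real \<Rightarrow> real" where "bb k c = c * (1 - c) / den k c"
definition gam :: "nat \<Rightarrow> real \<Rightarrow> real" where "gam p c = - c / ((1 - c) * (1 - c + real p * c))"
definition qq :: "nat \<Rightarrow> real \<Rightarrow> real" where "qq p c = (1 - c) * (1 - c + real p * c)"
definition qq' :: "nat \<Rightarrow> real \<Rightarrow> real" where "qq' p c = - (1 - c + real p * c) + (1 - c) * (real p - 1)"
definition gam' :: "nat \<Rightarrow> real \<Rightarrow> real" where "gam' p c = - (qq p c - c * qq' p c) / (qq p c)\<^sup>2"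
definition Mexp :: "nat \<Rightarrow> real \<Rightarrow> nat \<Rightarrow> nat \<Rightarrow> real" where
  "Mexp k c i j = (if i = j then 1 - c else 0) + bb k c"

lemma qq_deriv: "((qq p) has_real_derivative qq' p c) (at c)"
  unfolding qq_def qq'_def by (auto intro!: derivative_eq_intros simp: algebra_simps)

lemma gam_eq: "gam p c = - c / qq p c"
  unfolding gam_def qq_def ..

lemma gam_deriv: "qq p c \<noteq> 0 \<Longrightarrow> ((gam p) has_real_derivative gam' p c) (at c)"
proof -
  assume q: "qq p c \<noteq> 0"
  have "((\<lambda>c. - c / qq p c) has_real_derivative (- 1 * qq p c - (- c) * qq' p c) / (qq p c * qq p c)) (at c)"
    by (rule DERIV_divide[OF _ qq_deriv q]) (auto intro!: derivative_eq_intros)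
  moreover have "(- 1 * qq p c - (- c) * qq' p c) / (qq p c * qq p c) = gam' p c"
    unfolding gam'_def by (simp add: power2_eq_square)
  moreover have "gam p = (\<lambda>c. - c / qq p c)" using gam_eq by (intro ext) auto
  ultimately show ?thesis by simp
qed

lemma muI_deriv: "den k c \<noteq> 0 \<Longrightarrow> ((\<lambda>c. L * c * real k / den k c) has_real_derivative L * real k / (den k c)\<^sup>2) (at c)"
  unfolding den_def by (auto intro!: derivative_eq_intros simp: power2_eq_square field_simps)

lemma alpha_deriv: "1 - c \<noteq> 0 \<Longrightarrow> ((\<lambda>c. 1 / (1 - c)) has_real_derivative 1 / (1 - c)\<^sup>2) (at c)"
  by (auto intro!: derivative_eq_intros simp: power2_eq_square field_simps)

lemma bb_deriv0: "((\<lambda>c. bb k c) has_real_derivative 1) (at 0)"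
  unfolding bb_def den_def by (auto intro!: derivative_eq_intros)

lemma Mexp_deriv: "((\<lambda>c. Mexp k c i j) has_real_derivative ((if i = j then -1 else 0) + 1)) (at 0)"
proof (cases "i = j")
  case True
  have "((\<lambda>c. (1 - c) + bb k c) has_real_derivative -1 + 1) (at 0)"
    by (rule DERIV_add[OF _ bb_deriv0]) (auto intro!: derivative_eq_intros)
  then show ?thesis using True unfolding Mexp_def by simp
next
  case False
  have "((\<lambda>c. 0 + bb k c) has_real_derivative 0 + 1) (at 0)"
    by (rule DERIV_add[OF DERIV_const bb_deriv0])
  then show ?thesis using False unfolding Mexp_def by simp
qed

lemma Mexp0: "Mexp k 0 i j = (if i = j then 1 else 0)"
  unfolding Mexp_def bb_def den_def by simp

lemma gam_alg:
  fixes a d q m c :: real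
  assumes "a \<noteq> 0" "d \<noteq> 0" "q \<noteq> 0" "d + m * c = q"
  shows "- (c * a / d) / (a * (a + m * (c * a / d))) = - c / (a * q)"
proof -
  have "a + m * (c * a / d) = a * (d + m * c) / d" using assms(1,2) by (simp add: field_simps)
  also have "\<dots> = a * q / d" using assms(4) by simp
  finally have "a + m * (c * a / d) = a * q / d" .
  then show ?thesis using assms by (simp add: field_simps)
qed

lemma bb_alt: "den k c \<noteq> 0 \<Longrightarrow> c - c * c * real k / den k c = bb k c"
  unfolding bb_def den_def by (simp add: field_simps)

lemma PI_eq:
  fixes p k n :: nat and A :: "nat set" and lam c :: real
  assumes Asub: "A \<subseteq> {1..p}" and k: "card A = k"
    and c1: "1 - c \<noteq> 0" and cd: "den k c \<noteq> 0" and cq: "1 - c + real p * c \<noteq> 0"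
  shows "PI n lam c p A (\<lambda>_. 1) =
    (\<integral>x. (\<Prod>i\<in>{1..p} - A. indicator {- (lam * sqrt (real n))..lam * sqrt (real n)} (x i))
        * exp (- qf ({1..p} - A) (1 / (1 - c)) (gam p c) (lam * sqrt (real n) * c * real k / den k c) x / 2) \<partial>PL ({1..p} - A))
      / sqrt ((2 * pi) ^ (p - k) * mdet ({1..p} - A) (Mexp k c))"
proof -
  define I where "I = {1..p} - A"
  define L where "L = lam * sqrt (real n)"
  have finA: "finite A" using Asub finite_subset by blast
  have finI: "finite I" unfolding I_def by simp
  have kp: "k \<le> p" using Asub k card_mono[of "{1..p}" A] by auto
  have cardI: "card I = p - k" unfolding I_def using Asub k finA by (simp add: card_Diff_subset)
  have cdA: "den (card A) c \<noteq> 0" using cd k by simp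
  have Sall: "(\<Sum>a\<in>A. \<Sum>b\<in>A. minv A (cs_corr c) a b) = real k / den k c"
  proof -
    have "(\<Sum>a\<in>A. \<Sum>b\<in>A. minv A (cs_corr c) a b) = (\<Sum>a\<in>A. 1 / den k c)"
    proof (rule sum.cong[OF refl])
      fix a assume a: "a \<in> A"
      have "(\<Sum>b\<in>A. minv A (cs_corr c) a b) = (\<Sum>b\<in>A. aij (card A) c a b)"
        using Ainv_eq[OF finA c1 cdA a] by (intro sum.cong) auto
      also have "\<dots> = 1 / den k c" using aij_rowsum[OF finA c1 cdA a] k by simp
      finally show "(\<Sum>b\<in>A. minv A (cs_corr c) a b) = 1 / den k c" .
    qed
    also have "\<dots> = real k / den k c" using k by simp
    finally show ?thesis .
  qed
  have notA: "i \<notin> A" if "i \<in> I" for i using that unfolding I_def by auto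
  have mean: "L * (\<Sum>a\<in>A. \<Sum>b\<in>A. cs_corr c i a * minv A (cs_corr c) a b * 1) = L * c * real k / den k c"
    if i: "i \<in> I" for i
  proof -
    have "(\<Sum>a\<in>A. \<Sum>b\<in>A. cs_corr c i a * minv A (cs_corr c) a b * 1) = (\<Sum>a\<in>A. \<Sum>b\<in>A. c * minv A (cs_corr c) a b)"
      using notA[OF i] by (intro sum.cong refl) (auto simp: cs_corr_def)
    also have "\<dots> = c * (real k / den k c)" by (simp add: sum_distrib_left[symmetric] Sall)
    finally show ?thesis by simp
  qed
  have cov: "cs_corr c i j - (\<Sum>a\<in>A. \<Sum>b\<in>A. cs_corr c i a * minv A (cs_corr c) a b * cs_corr c b j)
      = (if i = j then 1 - c else 0) + bb k c" if i: "i \<in> I" and j: "j \<in> I" for i j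
  proof -
    have "(\<Sum>a\<in>A. \<Sum>b\<in>A. cs_corr c i a * minv A (cs_corr c) a b * cs_corr c b j) = (\<Sum>a\<in>A. \<Sum>b\<in>A. c * c * minv A (cs_corr c) a b)"
      using notA[OF i] notA[OF j] by (intro sum.cong refl) (auto simp: cs_corr_def)
    also have "\<dots> = c * c * (real k / den k c)" by (simp add: sum_distrib_left[symmetric] Sall)
    finally have "(\<Sum>a\<in>A. \<Sum>b\<in>A. cs_corr c i a * minv A (cs_corr c) a b * cs_corr c b j) = c * c * real k / den k c"
      by simp
    moreover have "c - c * c * real k / den k c = bb k c" by (rule bb_alt[OF cd])
    ultimately show ?thesis unfolding cs_corr_def by auto
  qed
  define Cov where "Cov i j = cs_corr c i j - (\<Sum>a\<in>A. \<Sum>b\<in>A. cs_corr c i a * minv A (cs_corr c) a b * cs_corr c b j)" for i j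
  have rel: "den k c + real (card I) * c = 1 - c + real p * c"
    unfolding cardI den_def using kp by (simp add: of_nat_diff algebra_simps)
  have bbv: "bb k c = c * (1 - c) / den k c" unfolding bb_def ..
  have ga: "- bb k c / ((1 - c) * (1 - c + real (card I) * bb k c)) = gam p c"
    unfolding bbv gam_def using gam_alg[OF c1 cd cq rel] by simp
  have nz: "1 - c + real (card I) * bb k c \<noteq> 0"
  proof -
    have "1 - c + real (card I) * bb k c = (1 - c) * (den k c + real (card I) * c) / den k c"
      unfolding bbv using cd by (simp add: field_simps)
    then show ?thesis unfolding rel using c1 cd cq by simp
  qed
  have inv: "is_inv I Cov (\<lambda>i j. (if i = j then 1 / (1 - c) else 0) + gam p c)"
  proof (rule inv_aIbJ[OF finI c1 nz])
    show "Cov i j = (if i = j then 1 - c else 0) + bb k c" if "i \<in> I" "j \<in> I" for i j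
      unfolding Cov_def by (rule cov[OF that])
    show "(if i = j then 1 / (1 - c) else 0) + gam p c =
        (if i = j then 1 / (1 - c) else 0) + - bb k c / ((1 - c) * (1 - c + real (card I) * bb k c))" for i j
      using ga by simp
  qed
  have "PI n lam c p A (\<lambda>_. 1) = mvn_prob I (\<lambda>i. L * (\<Sum>a\<in>A. \<Sum>b\<in>A. cs_corr c i a * minv A (cs_corr c) a b * 1)) Cov
       {v. \<forall>i\<in>I. \<bar>v i\<bar> \<le> L}"
    unfolding PI_def Let_def I_def L_def Cov_def by simp
  also have "\<dots> = (\<integral>x. (\<Prod>i\<in>I. indicator {-L..L} (x i)) * exp (- qf I (1 / (1 - c)) (gam p c) (L * c * real k / den k c) x / 2) \<partial>PL I)
      / sqrt ((2 * pi) ^ card I * mdet I Cov)"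
  proof (rule mvn_prob_eq[OF finI])
    show "L * (\<Sum>a\<in>A. \<Sum>b\<in>A. cs_corr c i a * minv A (cs_corr c) a b * 1) = L * c * real k / den k c" if "i \<in> I" for i
      by (rule mean[OF that])
    show "minv I Cov i j = (if i = j then 1 / (1 - c) else 0) + gam p c" if "i \<in> I" "j \<in> I" for i j
      using minv_unique[OF finI inv that] by simp
    show "{v. \<forall>i\<in>I. \<bar>v i\<bar> \<le> L} = {x. \<forall>i\<in>I. x i \<in> {-L..L}}" by (auto simp: abs_le_iff)
  qed
  also have "mdet I Cov = mdet I (Mexp k c)"
    using cov unfolding Cov_def Mexp_def by (intro mdet_cong) auto
  finally show ?thesis unfolding I_def L_def cardI[unfolded I_def] .
qed

lemma PI_deriv:
  fixes p k n :: nat and A :: "nat set" and lam :: real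
  assumes Asub: "A \<subseteq> {1..p}" and k: "card A = k" and kp: "k < p"
  shows "((\<lambda>c. PI n lam c p A (\<lambda>_. 1)) has_real_derivative 0) (at 0)"
proof -
  define L where "L = lam * sqrt (real n)"
  define I where "I = {1..p} - A"
  define T where "T = {-L..L}"
  have T: "T \<in> sets borel" unfolding T_def by simp
  have finI: "finite I" unfolding I_def by simp
  define J where "J c = (\<integral>x. (\<Prod>i\<in>I. indicator T (x i))
        * exp (- qf I (1 / (1 - c)) (gam p c) (L * c * real k / den k c) x / 2) \<partial>PL I)" for c
  have evs: "\<forall>\<^sub>F c in nhds 0. \<bar>c\<bar> < 1 / (real p + 1)" by (rule ev_small) simp
  have evd: "\<forall>\<^sub>F c in nhds 0. 1 - c \<noteq> 0 \<and> den k c \<noteq> 0 \<and> 1 - c + real p * c \<noteq> 0"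
    using evs
  proof eventually_elim
    case (elim c)
    show ?case using small_good[OF elim, of k] kp by simp
  qed
  have dJ: "(J has_real_derivative 0) (at 0)"
  proof -
    have ev': "\<forall>\<^sub>F c in nhds 0. ((\<lambda>c. 1 / (1 - c)) has_real_derivative (\<lambda>c. 1 / (1 - c)\<^sup>2) c) (at c)
        \<and> ((gam p) has_real_derivative (gam' p) c) (at c)
        \<and> ((\<lambda>c. L * c * real k / den k c) has_real_derivative (\<lambda>c. L * real k / (den k c)\<^sup>2) c) (at c)"
      using evd
    proof eventually_elim
      case (elim c)
      have "qq p c \<noteq> 0" unfolding qq_def using elim by simp
      then show ?case using alpha_deriv[of c] gam_deriv[of p c] muI_deriv[of k c L] elim by simp
    qed
    have c1: "isCont (\<lambda>c. 1 / (1 - c)\<^sup>2 :: real) 0" by (auto intro!: continuous_intros)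
    have c2: "isCont (gam' p) 0" unfolding gam'_def qq_def qq'_def by (auto intro!: continuous_intros)
    have c3: "isCont (\<lambda>c. L * real k / (den k c)\<^sup>2) 0" unfolding den_def by (auto intro!: continuous_intros)
    note gd = gauss_deriv[OF finI T ev' c1 c2 c3]
    have a0: "1 / (1 - (0::real)) = 1" by simp
    have g0: "gam p 0 = 0" unfolding gam_def by simp
    have "(J has_real_derivative
       (\<integral>x. (\<Prod>i\<in>I. indicator T (x i)) * exp (- qf I 1 0 (L * 0 * real k / den k 0) x / 2)
            * (- qd I 1 (1 / (1 - 0)\<^sup>2) 0 (gam' p 0) (L * 0 * real k / den k 0) (L * real k / (den k 0)\<^sup>2) x / 2) \<partial>PL I)) (at 0)"
      unfolding J_def by (rule gd[OF a0 g0])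
    moreover have "(\<integral>x. (\<Prod>i\<in>I. indicator T (x i)) * exp (- qf I 1 0 (L * 0 * real k / den k 0) x / 2)
            * (- qd I 1 (1 / (1 - 0)\<^sup>2) 0 (gam' p 0) (L * 0 * real k / den k 0) (L * real k / (den k 0)\<^sup>2) x / 2) \<partial>PL I) = 0"
    proof -
      have ag: "1 / (1 - 0)\<^sup>2 + gam' p 0 = (0::real)" unfolding gam'_def qq_def qq'_def by simp
      have m0: "L * 0 * real k / den k 0 = 0" by simp
      show ?thesis unfolding m0 DJ_formula[OF finI T ag] unfolding T_def A1_sym by simp
    qed
    ultimately show ?thesis by simp
  qed
  have dd: "((\<lambda>c. mdet I (Mexp k c)) has_real_derivative (\<Sum>i\<in>I. (if i = i then -1 else 0) + 1)) (at 0)"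
    by (rule mdet_deriv(1)[OF finI Mexp_deriv Mexp0])
  then have ddet: "((\<lambda>c. mdet I (Mexp k c)) has_real_derivative 0) (at 0)" by simp
  have det0: "mdet I (Mexp k 0) = 1" by (rule mdet_deriv(2)[OF finI Mexp_deriv Mexp0])
  have pos: "(2 * pi) ^ (p - k) * mdet I (Mexp k 0) > 0" unfolding det0 by simp
  have dR: "((\<lambda>c. J c / sqrt ((2 * pi) ^ (p - k) * mdet I (Mexp k c))) has_real_derivative 0) (at 0)"
  proof -
    have inner: "((\<lambda>c. (2 * pi) ^ (p - k) * mdet I (Mexp k c)) has_real_derivative (2 * pi) ^ (p - k) * 0) (at 0)"
      by (rule DERIV_cmult[OF ddet])
    have ds: "((\<lambda>c. sqrt ((2 * pi) ^ (p - k) * mdet I (Mexp k c))) has_real_derivative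
        inverse (sqrt ((2 * pi) ^ (p - k) * mdet I (Mexp k 0))) / 2 * ((2 * pi) ^ (p - k) * 0)) (at 0)"
      by (rule DERIV_chain2[OF DERIV_real_sqrt[OF pos] inner])
    have ds0: "((\<lambda>c. sqrt ((2 * pi) ^ (p - k) * mdet I (Mexp k c))) has_real_derivative 0) (at 0)"
      using ds by simp
    have sv: "sqrt ((2 * pi) ^ (p - k) * mdet I (Mexp k 0)) > 0" using pos by simp
    have "((\<lambda>c. J c / sqrt ((2 * pi) ^ (p - k) * mdet I (Mexp k c))) has_real_derivative
        (0 * sqrt ((2 * pi) ^ (p - k) * mdet I (Mexp k 0)) - J 0 * 0) / (sqrt ((2 * pi) ^ (p - k) * mdet I (Mexp k 0)) * sqrt ((2 * pi) ^ (p - k) * mdet I (Mexp k 0)))) (at 0)"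
      by (rule DERIV_divide[OF dJ ds0]) (use sv in linarith)
    then show ?thesis by simp
  qed
  have ev: "\<forall>\<^sub>F c in nhds 0. PI n lam c p A (\<lambda>_. 1) = J c / sqrt ((2 * pi) ^ (p - k) * mdet I (Mexp k c))"
    using evd
  proof eventually_elim
    case (elim c)
    then show ?case unfolding J_def T_def L_def I_def using PI_eq[OF Asub k, of c n lam] by simp
  qed
  show ?thesis using dR DERIV_cong_ev[OF refl ev refl] by simp
qed

theorem lemma3:
  fixes n p k :: nat and A :: "nat set" and beta lam :: real
  assumes "n \<ge> 1" and "1 \<le> k" and "k < p"
    and "A \<subseteq> {1..p}" and "card A = k"
    and "beta > 0" and "lam > 0"
  shows "((\<lambda>c. PI n lam c p A (\<lambda>_. 1)) has_real_derivative 0) (at 0)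
    \<and> (2 * (lam * sqrt (real n)) \<ge>
          std_normal_density (sqrt (real n) * (beta - lam))
          / std_normal_cdf (sqrt (real n) * (beta - lam))
       \<longrightarrow> (\<exists>D. ((\<lambda>c. PS n lam c A (\<lambda>_. beta)) has_real_derivative D) (at 0) \<and> D \<ge> 0))"
proof
  show "((\<lambda>c. PI n lam c p A (\<lambda>_. 1)) has_real_derivative 0) (at 0)"
    by (rule PI_deriv[OF assms(4) assms(5) assms(3)])
  have finA: "finite A" using assms(4) finite_subset by blast
  show "2 * (lam * sqrt (real n)) \<ge>
          std_normal_density (sqrt (real n) * (beta - lam))
          / std_normal_cdf (sqrt (real n) * (beta - lam))
       \<longrightarrow> (\<exists>D. ((\<lambda>c. PS n lam c A (\<lambda>_. beta)) has_real_derivative D) (at 0) \<and> D \<ge> 0)"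
    using PS_deriv[OF finA assms(5) assms(2) assms(6) assms(7) assms(1)] by blast
qed

end
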